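(* Under the assumptions below, suppose $\mu$ is sufficiently large. The data $(X_i,U_i,\mathcal{E}_i)$ are informative for the cooperative output regulation problem if and only if, for every $i\in\{1,\dots,N\}$, there exists a right inverse $X_i^{+}$ of $X_i$ such that $(X_i\mathcal{D}_{11}-E_iV)X_i^{+}$ is stable, and the data-driven regulator equations $(X_i\mathcal{D}_{11}-E_iV)M_i=X_iM_iS-E_i$, $(\mathcal{E}_i-F_iV)M_i=-F_i$ have a solution $M_i$. Moreover, $K_{2i}$ can be computed as $K_{2i}=(U_i-K_{1i}X_i)M_i$.
   Context: Leader–follower multi-agent system with $N$ followers. Follower $i$: $\dot x_i=A_ix_i+B_iu_i+E_iv$, $e_i=C_ix_i+D_iu_i+F_iv$, with $x_i\in\mathbb{R}^{n_i}$, $e_i\in\mathbb{R}^{p}$; exosystem $\dot v=Sv$, $v\in\mathbb{R}^q$. $A_i,B_i,C_i,D_i$ unknown; $E_i,F_i,S$ known. Distributed controller: $u_i=K_{1i}x_i+K_{2i}\eta_i$, $\dot\eta_i=S\eta_i+\mu[\sum_j a_{ij}(\eta_j-\eta_i)+a_{i0}(v-\eta_i)]$, with $K_{1i}=U_iX_i^{+}$. Data: signals expanded in an orthogonal polynomial basis truncated at degree $N$; $X_i,U_i,\mathcal{E}_i,V$ are the matrices of the first $N+1$ coefficient vectors of $x_i,u_i,e_i,v$, and $\mathcal{D}_{11}$ is the leading $(N+1)\times(N+1)$ block of the basis differentiation matrix. Exact data: $X_i\mathcal{D}_{11}=A_iX_i+B_iU_i+E_iV$, $\mathcal{E}_i=C_iX_i+D_iU_i+F_iV$.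 The data are informative for cooperative output regulation if every system consistent with the data admits gains making the closed-loop matrix Hurwitz and the regulator equations $\Pi_iS=A_i\Pi_i+B_i\Gamma_i+E_i$, $0=C_i\Pi_i+D_i\Gamma_i+F_i$ (with $\Gamma_i=K_{1i}\Pi_i+K_{2i}$) solvable, so that $e(t)\to0$. Assumptions: $S$ has no eigenvalues with negative real part; the graph is unknown but contains a directed spanning tree rooted at the leader; nonzero Laplacian entries satisfy $\varepsilon_1\le|\mathcal{L}_{ij}|\le\varepsilon_2$. *)

theory Defs
  imports Complex_Main "Jordan_Normal_Form.Char_Poly"
begin

definition hurwitz :: "real mat \<Rightarrow> bool" where
  "hurwitz M \<longleftrightarrow> square_mat M \<and>
     (\<forall>lam. eigenvalue (map_mat complex_of_real M) lam \<longrightarrow> Re lam < 0)"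

definition right_inverse :: "real mat \<Rightarrow> real mat \<Rightarrow> bool" where
  "right_inverse X Xp \<longleftrightarrow> Xp \<in> carrier_mat (dim_col X) (dim_row X) \<and> X * Xp = 1\<^sub>m (dim_row X)"

text \<open>Graph on nodes 0..N: node 0 is the leader, nodes 1..N are the followers.
  a i j is the weight of the edge j \<rightarrow> i (node i receives information from node j).\<close>
definition laplacian :: "nat \<Rightarrow> (nat \<Rightarrow> nat \<Rightarrow> real) \<Rightarrow> nat \<Rightarrow> nat \<Rightarrow> real" where
  "laplacian N a i j = (if i = j then (\<Sum>k\<in>{0..N} - {i}. a i k) else - a i j)"

definition graph_edges :: "nat \<Rightarrow> (nat \<Rightarrow> nat \<Rightarrow> real) \<Rightarrow> (nat \<times> nat) set" where
  "graph_edges N a = {(j, i). i \<in> {0..N} \<and> j \<in> {0..N} \<and> a i j \<noteq> 0}"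

definition admissible_graph :: "nat \<Rightarrow> real \<Rightarrow> real \<Rightarrow> (nat \<Rightarrow> nat \<Rightarrow> real) \<Rightarrow> bool" where
  "admissible_graph N eps1 eps2 a \<longleftrightarrow>
     (\<forall>i\<in>{0..N}. \<forall>j\<in>{0..N}. a i j \<ge> 0) \<and>
     (\<forall>i\<in>{0..N}. a i i = 0) \<and>
     (\<forall>j\<in>{0..N}. a 0 j = 0) \<and>
     (\<forall>i\<in>{0..N}. (0, i) \<in> (graph_edges N a)\<^sup>*) \<and>
     (\<forall>i\<in>{0..N}. \<forall>j\<in>{0..N}. laplacian N a i j \<noteq> 0 \<longrightarrow>
        eps1 \<le> \<bar>laplacian N a i j\<bar> \<and> \<bar>laplacian N a i j\<bar> \<le> eps2)"

text \<open>Matrix of the distributed observer: I_N \<otimes> S - mu (H \<otimes> I_q), where H is the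
  follower block (rows/columns 1..N) of the Laplacian (it contains the leader weights
  a i 0 on the diagonal). Block (i,j), 0-based, corresponds to followers i+1, j+1.\<close>
definition observer_mat :: "nat \<Rightarrow> real mat \<Rightarrow> (nat \<Rightarrow> nat \<Rightarrow> real) \<Rightarrow> real \<Rightarrow> real mat" where
  "observer_mat N S a mu = (let q = dim_row S in
     mat (N * q) (N * q) (\<lambda>(r, c).
       (if r div q = c div q then S $$ (r mod q, c mod q) else 0)
       - mu * laplacian N a (r div q + 1) (c div q + 1) * (if r mod q = c mod q then 1 else 0)))"

definition closed_loop_mat ::
  "nat \<Rightarrow> real mat \<Rightarrow> (nat \<Rightarrow> nat \<Rightarrow> real) \<Rightarrow> real \<Rightarrow> (nat \<Rightarrow> real mat) \<Rightarrow> (nat \<Rightarrow> real mat) \<Rightarrow> real mat" where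
  "closed_loop_mat N S a mu Acl BK2 = (let
     TL = diag_block_mat (map Acl [1..<N+1]);
     TR = diag_block_mat (map BK2 [1..<N+1]);
     BR = observer_mat N S a mu
   in four_block_mat TL TR (0\<^sub>m (dim_row BR) (dim_col TL)) BR)"

definition consistent_sys ::
  "real mat \<Rightarrow> real mat \<Rightarrow> real mat \<Rightarrow> real mat \<Rightarrow> real mat \<Rightarrow> real mat \<Rightarrow> real mat \<Rightarrow> real mat
   \<Rightarrow> real mat \<Rightarrow> real mat \<Rightarrow> real mat \<Rightarrow> bool" where
  "consistent_sys D11 V X U Ec E F A B C D \<longleftrightarrow>
     A \<in> carrier_mat (dim_row X) (dim_row X) \<and> B \<in> carrier_mat (dim_row X) (dim_row U) \<and>
     C \<in> carrier_mat (dim_row Ec) (dim_row X) \<and> D \<in> carrier_mat (dim_row Ec) (dim_row U) \<and>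
     X * D11 = A * X + B * U + E * V \<and> Ec = C * X + D * U + F * V"

definition gains_work ::
  "nat \<Rightarrow> real mat \<Rightarrow> (nat \<Rightarrow> nat \<Rightarrow> real) \<Rightarrow> real \<Rightarrow> real mat \<Rightarrow> real mat \<Rightarrow>
   (nat \<Rightarrow> real mat) \<Rightarrow> (nat \<Rightarrow> real mat) \<Rightarrow> (nat \<Rightarrow> real mat) \<Rightarrow> (nat \<Rightarrow> real mat) \<Rightarrow> (nat \<Rightarrow> real mat) \<Rightarrow>
   (nat \<Rightarrow> real mat) \<Rightarrow> (nat \<Rightarrow> real mat) \<Rightarrow> bool" where
  "gains_work N S a mu D11 V X U Ec E F K1 K2 \<longleftrightarrow>
     (\<forall>i\<in>{1..N}. K1 i \<in> carrier_mat (dim_row (U i)) (dim_row (X i)) \<and>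
                 K2 i \<in> carrier_mat (dim_row (U i)) (dim_row S)) \<and>
     (\<forall>A B C D. (\<forall>i\<in>{1..N}. consistent_sys D11 V (X i) (U i) (Ec i) (E i) (F i) (A i) (B i) (C i) (D i)) \<longrightarrow>
        hurwitz (closed_loop_mat N S a mu (\<lambda>i. A i + B i * K1 i) (\<lambda>i. B i * K2 i)) \<and>
        (\<forall>i\<in>{1..N}. \<exists>Pi Gamma.
            Pi \<in> carrier_mat (dim_row (X i)) (dim_row S) \<and>
            Gamma \<in> carrier_mat (dim_row (U i)) (dim_row S) \<and>
            Gamma = K1 i * Pi + K2 i \<and>
            Pi * S = A i * Pi + B i * Gamma + E i \<and>
            0\<^sub>m (dim_row (Ec i)) (dim_row S) = C i * Pi + D i * Gamma + F i))"

definition informative_cor ::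
  "nat \<Rightarrow> real mat \<Rightarrow> (nat \<Rightarrow> nat \<Rightarrow> real) \<Rightarrow> real \<Rightarrow> real mat \<Rightarrow> real mat \<Rightarrow>
   (nat \<Rightarrow> real mat) \<Rightarrow> (nat \<Rightarrow> real mat) \<Rightarrow> (nat \<Rightarrow> real mat) \<Rightarrow> (nat \<Rightarrow> real mat) \<Rightarrow> (nat \<Rightarrow> real mat) \<Rightarrow> bool" where
  "informative_cor N S a mu D11 V X U Ec E F \<longleftrightarrow>
     (\<exists>Xp K2. (\<forall>i\<in>{1..N}. right_inverse (X i) (Xp i)) \<and>
        gains_work N S a mu D11 V X U Ec E F (\<lambda>i. U i * Xp i) K2)"

definition data_condition ::
  "real mat \<Rightarrow> real mat \<Rightarrow> real mat \<Rightarrow> real mat \<Rightarrow> real mat \<Rightarrow> real mat \<Rightarrow> real mat \<Rightarrow> real mat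
   \<Rightarrow> real mat \<Rightarrow> bool" where
  "data_condition S D11 V X Ec E F Xp M \<longleftrightarrow>
     right_inverse X Xp \<and>
     hurwitz ((X * D11 - E * V) * Xp) \<and>
     M \<in> carrier_mat (dim_col X) (dim_row S) \<and>
     (X * D11 - E * V) * M = X * M * S - E \<and>
     (Ec - F * V) * M = - F"

end

theory Submission
  imports Defs "Jordan_Normal_Form.Schur_Decomposition"
begin


lemma char_matrix_four_block:
  assumes A: "A \<in> carrier_mat n n" and B: "B \<in> carrier_mat n m" and D: "D \<in> carrier_mat m m"
  shows "char_matrix (four_block_mat A B (0\<^sub>m m n) D) e =
     four_block_mat (char_matrix A e) B (0\<^sub>m m n) (char_matrix D e)"
  unfolding char_matrix_def
  by (rule eq_matI, insert A B D, auto)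


lemma eig_four_block:
  fixes A :: "'a :: field mat"
  assumes A: "A \<in> carrier_mat n n" and B: "B \<in> carrier_mat n m" and D: "D \<in> carrier_mat m m"
  shows "eigenvalue (four_block_mat A B (0\<^sub>m m n) D) e \<longleftrightarrow> eigenvalue A e \<or> eigenvalue D e"
proof -
  have c: "four_block_mat A B (0\<^sub>m m n) D \<in> carrier_mat (n+m) (n+m)" using A D by auto
  have "det (four_block_mat (char_matrix A e) B (0\<^sub>m m n) (char_matrix D e)) = det (char_matrix A e) * det (char_matrix D e)"
    by (rule det_four_block_mat_lower_left_zero[of _ n _ m], insert A B D, auto)
  then show ?thesis
    unfolding eigenvalue_det[OF c] eigenvalue_det[OF A] eigenvalue_det[OF D]
      char_matrix_four_block[OF A B D] by simp
qed



lemma eig_diag_block: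
  fixes As :: "'a :: field mat list"
  assumes "\<forall>A\<in>set As. square_mat A"
  shows "eigenvalue (diag_block_mat As) e \<longleftrightarrow> (\<exists>A\<in>set As. eigenvalue A e)"
  using assms
proof (induct As)
  case Nil
  have "\<not> eigenvalue (0\<^sub>m 0 0 :: 'a mat) e"
    using eigenvalue_imp_nonzero_dim[of "0\<^sub>m 0 0 :: 'a mat" 0 e] zero_carrier_mat by blast
  then show ?case by simp
next
  case (Cons A As)
  let ?B = "diag_block_mat As"
  from Cons(2) have sqA: "\<forall>A\<in>set As. square_mat A" by simp
  from diag_block_mat_square[OF sqA] have sq: "square_mat ?B" .
  have d1: "dim_col ?B = dim_row ?B" using sq by simp
  have Bc: "?B \<in> carrier_mat (dim_row ?B) (dim_row ?B)" using d1 unfolding carrier_mat_def by simp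
  from Cons(2) have d2: "dim_col A = dim_row A" by simp
  have Ac: "A \<in> carrier_mat (dim_row A) (dim_row A)" using d2 unfolding carrier_mat_def by simp
  have eq: "diag_block_mat (A # As) = four_block_mat A (0\<^sub>m (dim_row A) (dim_row ?B)) (0\<^sub>m (dim_row ?B) (dim_row A)) ?B"
    unfolding diag_block_mat.simps Let_def d1 d2 ..
  show ?case unfolding eq eig_four_block[OF Ac zero_carrier_mat Bc] Cons(1)[OF sqA] by simp
qed

lemma map_diag_block:
  assumes "f 0 = 0"
  shows "map_mat f (diag_block_mat As) = diag_block_mat (map (map_mat f) As)"
proof (induct As)
  case Nil then show ?case by (intro eq_matI, simp_all)
next
  case (Cons A As)
  let ?B = "diag_block_mat As"
  have "map_mat f (diag_block_mat (A # As)) = map_mat f (four_block_mat A (0\<^sub>m (dim_row A) (dim_col ?B)) (0\<^sub>m (dim_row ?B) (dim_col A)) ?B)"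
    unfolding diag_block_mat.simps Let_def ..
  also have "\<dots> = four_block_mat (map_mat f A) (map_mat f (0\<^sub>m (dim_row A) (dim_col ?B))) (map_mat f (0\<^sub>m (dim_row ?B) (dim_col A))) (map_mat f ?B)"
    by (rule eq_matI; simp)
  also have "map_mat f (0\<^sub>m (dim_row A) (dim_col ?B)) = 0\<^sub>m (dim_row A) (dim_col ?B)"
    by (intro eq_matI; simp add: assms)
  also have "map_mat f (0\<^sub>m (dim_row ?B) (dim_col A)) = 0\<^sub>m (dim_row ?B) (dim_col A)"
    by (intro eq_matI; simp add: assms)
  also have "map_mat f ?B = diag_block_mat (map (map_mat f) As)" by (rule Cons)
  finally show ?case unfolding list.map diag_block_mat.simps Let_def
    by (simp add: dim_diag_block_mat o_def)
qed


primrec Rs :: "nat \<Rightarrow> (nat \<Rightarrow> nat \<Rightarrow> real) \<Rightarrow> nat \<Rightarrow> nat set" where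
  "Rs N a 0 = {0}"
| "Rs N a (Suc k) = Rs N a k \<union> {i\<in>{0..N}. \<exists>j\<in>Rs N a k. a i j \<noteq> 0}"

lemma Rs_sub: "Rs N a k \<subseteq> {0..N}"
  by (induct k, auto)

lemma Rs_fin: "finite (Rs N a k)"
  by (rule finite_subset[OF Rs_sub], simp)

lemma Rs_mono: "k \<le> m \<Longrightarrow> Rs N a k \<subseteq> Rs N a m"
proof (induct m)
  case 0 then show ?case by simp
next
  case (Suc m)
  then show ?case by (cases "k = Suc m", auto)
qed

lemma Rs_stable: assumes "Rs N a (Suc k) = Rs N a k" shows "k \<le> m \<Longrightarrow> Rs N a m = Rs N a k"
proof (induct m)
  case 0 then show ?case by simp
next
  case (Suc m)
  show ?case
  proof (cases "k = Suc m")
    case True then show ?thesis by simp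
  next
    case False
    with Suc have "Rs N a m = Rs N a k" by simp
    then show ?thesis using assms by simp
  qed
qed

lemma Rs_card: "k + 1 \<le> card (Rs N a k) \<or> (\<forall>m. Rs N a m \<subseteq> Rs N a k)"
proof (induct k)
  case 0 then show ?case by simp
next
  case (Suc k)
  show ?case
  proof (cases "\<forall>m. Rs N a m \<subseteq> Rs N a k")
    case True
    then have "\<forall>m. Rs N a m \<subseteq> Rs N a (Suc k)" using Rs_mono[of k "Suc k" N a] by auto
    then show ?thesis by simp
  next
    case False
    with Suc have c: "k + 1 \<le> card (Rs N a k)" by simp
    show ?thesis
    proof (cases "Rs N a (Suc k) = Rs N a k")
      case True
      have "Rs N a m \<subseteq> Rs N a (Suc k)" for m
      proof (cases "k \<le> m")
        case True
        then show ?thesis using Rs_stable[OF \<open>Rs N a (Suc k) = Rs N a k\<close>, of m] \<open>Rs N a (Suc k) = Rs N a k\<close> by simp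
      next
        case False
        then show ?thesis using Rs_mono[of m "Suc k" N a] by simp
      qed
      then show ?thesis by simp
    next
      case False
      have "Rs N a k \<subset> Rs N a (Suc k)" using False Rs_mono[of k "Suc k" N a] by auto
      then have "card (Rs N a k) < card (Rs N a (Suc k))" using Rs_fin psubset_card_mono by blast
      then show ?thesis using c by simp
    qed
  qed
qed

lemma Rs_reach: assumes "(0, i) \<in> (graph_edges N a)\<^sup>*" shows "\<exists>k. i \<in> Rs N a k"
  using assms
proof (induct rule: rtrancl_induct)
  case base
  then show ?case by (rule exI[of _ 0], simp)
next
  case (step y z)
  then obtain k where k: "y \<in> Rs N a k" by blast
  from step(2) have "z \<in> {0..N}" "a z y \<noteq> 0" unfolding graph_edges_def by auto
  then have "z \<in> Rs N a (Suc k)" using k by auto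
  then show ?case by blast
qed

lemma Rs_all: assumes "(0, i) \<in> (graph_edges N a)\<^sup>*" "i \<in> {0..N}" shows "i \<in> Rs N a N"
proof -
  from Rs_reach[OF assms(1)] obtain k where k: "i \<in> Rs N a k" by blast
  from Rs_card[of N N a] show ?thesis
  proof
    assume "N + 1 \<le> card (Rs N a N)"
    moreover have "card {0..N} = N + 1" by simp
    moreover have "card (Rs N a N) \<le> card {0..N}" using Rs_sub[of N a N] by (intro card_mono, simp_all)
    ultimately have "Rs N a N = {0..N}" using Rs_sub[of N a N] card_subset_eq[of "{0..N}" "Rs N a N"] by simp
    then show ?thesis using assms(2) by simp
  next
    assume "\<forall>m. Rs N a m \<subseteq> Rs N a N"
    then show ?thesis using k by blast
  qed
qed

definition lev :: "nat \<Rightarrow> (nat \<Rightarrow> nat \<Rightarrow> real) \<Rightarrow> nat \<Rightarrow> nat" where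
  "lev N a i = (LEAST k. i \<in> Rs N a k)"

lemma lev_props:
  assumes "(0, i) \<in> (graph_edges N a)\<^sup>*" "i \<in> {0..N}"
  shows "i \<in> Rs N a (lev N a i)" "lev N a i \<le> N"
proof -
  have iN: "i \<in> Rs N a N" using Rs_all[OF assms] .
  then show "i \<in> Rs N a (lev N a i)" unfolding lev_def by (rule LeastI)
  show "lev N a i \<le> N" unfolding lev_def using iN by (rule Least_le)
qed

lemma lev_0: "lev N a 0 = 0"
  unfolding lev_def by (rule Least_eq_0, simp)

lemma lev_parent:
  assumes "(0, i) \<in> (graph_edges N a)\<^sup>*" "i \<in> {1..N}"
  shows "\<exists>l p. lev N a i = Suc l \<and> p \<in> {0..N} \<and> a i p \<noteq> 0 \<and> lev N a p \<le> l"
proof -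
  have i0: "i \<in> {0..N}" using assms(2) by simp
  note lp = lev_props[OF assms(1) i0]
  have "lev N a i \<noteq> 0"
  proof
    assume "lev N a i = 0"
    then have "i \<in> Rs N a 0" using lp(1) by simp
    then show False using assms(2) by simp
  qed
  then obtain l where l: "lev N a i = Suc l" using not0_implies_Suc by blast
  have "i \<notin> Rs N a l"
  proof
    assume "i \<in> Rs N a l"
    then have "lev N a i \<le> l" unfolding lev_def by (rule Least_le)
    then show False using l by simp
  qed
  moreover have "i \<in> Rs N a (Suc l)" using lp(1) l by simp
  ultimately obtain p where p: "p \<in> Rs N a l" "a i p \<noteq> 0" by auto
  have pN: "p \<in> {0..N}" using p(1) Rs_sub by blast
  have "lev N a p \<le> l" using p(1) unfolding lev_def by (rule Least_le)
  then show ?thesis using l pN p(2) by blast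
qed



definition rr :: "nat \<Rightarrow> real \<Rightarrow> real \<Rightarrow> real" where
  "rr N e1 e2 = e1 / (2 * (e1 + real N * e2))"

definition cH :: "nat \<Rightarrow> real \<Rightarrow> real \<Rightarrow> real" where
  "cH N e1 e2 = rr N e1 e2 ^ N * e1 / 2"

lemma rr_props: assumes "0 < e1" "e1 \<le> e2"
  shows "0 < rr N e1 e2" "rr N e1 e2 < 1" "rr N e1 e2 * (e1 + real N * e2) = e1 / 2"
proof -
  have p: "0 < e1 + real N * e2" using assms by (simp add: add_pos_nonneg)
  show "0 < rr N e1 e2" unfolding rr_def using assms p by simp
  have "0 \<le> real N * e2" using assms by simp
  then have "e1 < 2 * (e1 + real N * e2)" using assms by (smt (verit))
  then show "rr N e1 e2 < 1" unfolding rr_def using p by simp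
  show "rr N e1 e2 * (e1 + real N * e2) = e1 / 2" unfolding rr_def using p by (simp add: field_simps)
qed

lemma cH_pos: assumes "0 < e1" "e1 \<le> e2" shows "0 < cH N e1 e2"
  unfolding cH_def using rr_props[OF assms] assms by simp

lemma adm_facts:
  assumes adm: "admissible_graph N e1 e2 a" and e: "0 < e1" "e1 \<le> e2"
    and ij: "i \<in> {0..N}" "j \<in> {0..N}"
  shows "0 \<le> a i j" "a i j \<le> e2" "a i j \<noteq> 0 \<Longrightarrow> e1 \<le> a i j" "a i i = 0"
proof -
  note ad = adm[unfolded admissible_graph_def]
  show "0 \<le> a i j" using ad ij by blast
  show aii: "a i i = 0" using ad ij by blast
  have lij: "i \<noteq> j \<Longrightarrow> laplacian N a i j = - a i j" unfolding laplacian_def by simp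
  show "a i j \<le> e2"
  proof (cases "a i j = 0")
    case True then show ?thesis using e by simp
  next
    case False
    then have "i \<noteq> j" using aii by auto
    then have "laplacian N a i j \<noteq> 0" using lij False by simp
    then have "\<bar>laplacian N a i j\<bar> \<le> e2" using ad ij by blast
    then show ?thesis using lij \<open>i \<noteq> j\<close> by simp
  qed
  assume nz: "a i j \<noteq> 0"
  then have "i \<noteq> j" using aii by auto
  then have "laplacian N a i j \<noteq> 0" using lij nz by simp
  then have "e1 \<le> \<bar>laplacian N a i j\<bar>" using ad ij by blast
  moreover have "0 \<le> a i j" using ad ij by blast
  ultimately show "e1 \<le> a i j" using lij \<open>i \<noteq> j\<close> by simp
qed

lemma margin:
  assumes adm: "admissible_graph N e1 e2 a" and e: "0 < e1" "e1 \<le> e2"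
    and i: "i \<in> {1..N}"
  defines "r \<equiv> rr N e1 e2"
  shows "cH N e1 e2 \<le> (\<Sum>k\<in>{0..N}-{i}. a i k * ((1 - r ^ lev N a i) - (1 - r ^ lev N a k)))"
proof -
  note ad = adm[unfolded admissible_graph_def]
  have i0: "i \<in> {0..N}" using i by simp
  have reach: "(0, i) \<in> (graph_edges N a)\<^sup>*" using ad i0 by blast
  obtain l p where l: "lev N a i = Suc l" and p: "p \<in> {0..N}" "a i p \<noteq> 0" "lev N a p \<le> l"
    using lev_parent[OF reach i] by blast
  have pi: "p \<noteq> i" using p(2) adm_facts(4)[OF adm e i0 i0] by auto
  have r0: "0 < r" and r1: "r \<le> 1" and rE: "r * (e1 + real N * e2) = e1 / 2"
    using rr_props[OF e] unfolding r_def by (auto simp: less_imp_le)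
  have lN: "Suc l \<le> N" using lev_props(2)[OF reach i0] l by simp
  define f where "f k = a i k * ((1 - r ^ lev N a i) - (1 - r ^ lev N a k))" for k
  have pin: "p \<in> {0..N} - {i}" using p pi by simp
  have fin: "finite ({0..N} - {i})" by simp
  have split: "(\<Sum>k\<in>{0..N}-{i}. f k) = f p + (\<Sum>k\<in>{0..N}-{i}-{p}. f k)"
    using sum.remove[OF fin pin] by simp
  have h1: "e1 * (r ^ l - r ^ Suc l) \<le> f p"
  proof -
    have "r ^ l \<le> r ^ lev N a p" using power_decreasing[OF p(3), of r] r0 r1 by simp
    then have x: "r ^ l - r ^ Suc l \<le> r ^ lev N a p - r ^ Suc l" by simp
    have y: "0 \<le> r ^ l - r ^ Suc l" using power_decreasing[of l "Suc l" r] r0 r1 by simp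
    have ae: "e1 \<le> a i p" using adm_facts(3)[OF adm e i0 p(1) p(2)] .
    have "e1 * (r ^ l - r ^ Suc l) \<le> a i p * (r ^ lev N a p - r ^ Suc l)"
      by (rule mult_mono[OF ae x], insert e y ae, simp_all)
    then show ?thesis unfolding f_def l by simp
  qed
  have h2: "- (e2 * r ^ Suc l) \<le> f k" if k: "k \<in> {0..N}-{i}-{p}" for k
  proof -
    have k0: "k \<in> {0..N}" using k by simp
    have a0: "0 \<le> a i k" and a2: "a i k \<le> e2" using adm_facts[OF adm e i0 k0] by auto
    have "a i k * r ^ Suc l \<le> e2 * r ^ Suc l" using a2 r0 by (intro mult_right_mono, simp_all)
    moreover have "0 \<le> a i k * r ^ lev N a k" using a0 r0 by simp
    ultimately show ?thesis unfolding f_def l by (simp add: algebra_simps)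
  qed
  have h3: "- (real N * (e2 * r ^ Suc l)) \<le> (\<Sum>k\<in>{0..N}-{i}-{p}. f k)"
  proof -
    have "of_nat (card ({0..N}-{i}-{p})) * (- (e2 * r ^ Suc l)) \<le> (\<Sum>k\<in>{0..N}-{i}-{p}. f k)"
      by (rule sum_bounded_below, rule h2)
    moreover have "card ({0..N}-{i}-{p}) \<le> N"
    proof -
      have "card ({0..N}-{i}-{p}) \<le> card ({0..N}-{i})" by (rule card_mono, simp, blast)
      also have "\<dots> = N" using i0 by simp
      finally show ?thesis .
    qed
    moreover have "0 \<le> e2 * r ^ Suc l" using e r0 by simp
    ultimately show ?thesis
      by (smt (verit, ccfv_SIG) mult_right_mono of_nat_le_iff minus_mult_right)
  qed
  have "e1 * (r ^ l - r ^ Suc l) - real N * (e2 * r ^ Suc l) = r ^ l * (e1 - r * (e1 + real N * e2))"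
    by (simp add: algebra_simps)
  also have "\<dots> = r ^ l * (e1 / 2)" using rE by simp
  finally have eq: "e1 * (r ^ l - r ^ Suc l) - real N * (e2 * r ^ Suc l) = r ^ l * (e1 / 2)" .
  have "r ^ N \<le> r ^ l" using power_decreasing[of l N r] lN r0 r1 by simp
  then have "cH N e1 e2 \<le> r ^ l * (e1 / 2)" unfolding cH_def r_def[symmetric] using e
    by (simp add: mult_right_mono)
  also have "\<dots> \<le> (\<Sum>k\<in>{0..N}-{i}. f k)" using split h1 h3 eq by linarith
  finally show ?thesis unfolding f_def .
qed


lemma gersh:
  assumes adm: "admissible_graph N e1 e2 a" and e: "0 < e1" "e1 \<le> e2"
    and eq: "\<forall>i\<in>{1..N}. (\<Sum>j\<in>{1..N}. complex_of_real (laplacian N a i j) * u j) = \<nu> * u i"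
    and nz: "\<exists>i\<in>{1..N}. u i \<noteq> 0"
  shows "cH N e1 e2 \<le> Re \<nu>"
proof -
  note ad = adm[unfolded admissible_graph_def]
  define r where "r = rr N e1 e2"
  have r0: "0 < r" and r1: "r < 1" using rr_props[OF e] unfolding r_def by auto
  define d where "d k = 1 - r ^ lev N a k" for k
  have d0: "d 0 = 0" unfolding d_def lev_0 by simp
  have dpos: "0 < d k \<and> d k \<le> 1" if k: "k \<in> {1..N}" for k
  proof -
    have k0: "k \<in> {0..N}" using k by simp
    have reach: "(0, k) \<in> (graph_edges N a)\<^sup>*" using ad k0 by blast
    obtain l where l: "lev N a k = Suc l" using lev_parent[OF reach k] by blast
    have "r ^ Suc l \<le> r" using power_decreasing[of 1 "Suc l" r] r0 r1 by simp
    then have "r ^ lev N a k < 1" using l r1 by simp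
    moreover have "0 \<le> r ^ lev N a k" using r0 by simp
    ultimately show ?thesis unfolding d_def by simp
  qed
  define g where "g k = cmod (u k) / d k" for k
  have finI: "finite (g ` {1..N})" by simp
  from nz obtain j0 where j0: "j0 \<in> {1..N}" "u j0 \<noteq> 0" by blast
  have neI: "g ` {1..N} \<noteq> {}" using j0 by blast
  obtain i where i: "i \<in> {1..N}" "g i = Max (g ` {1..N})"
    using Max_in[OF finI neI] by (metis imageE)
  have gmax: "g j \<le> g i" if "j \<in> {1..N}" for j
    using Max_ge[OF finI] that i(2) by simp
  have "0 < g j0" unfolding g_def using j0 dpos[OF j0(1)] by simp
  then have gi: "0 < g i" using gmax[OF j0(1)] by simp
  have ui: "cmod (u i) = g i * d i" unfolding g_def using dpos[OF i(1)] by simp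
  have ub: "cmod (u j) \<le> g i * d j" if j: "j \<in> {1..N}" for j
  proof -
    have "cmod (u j) = g j * d j" unfolding g_def using dpos[OF j] by simp
    also have "\<dots> \<le> g i * d j" using gmax[OF j] dpos[OF j] by (simp add: mult_right_mono)
    finally show ?thesis .
  qed
  have i0: "i \<in> {0..N}" using i by simp
  define Lii where "Lii = laplacian N a i i"
  have Lii: "Lii = (\<Sum>k\<in>{0..N}-{i}. a i k)" unfolding Lii_def laplacian_def by simp
  have fin1: "finite {1..N}" by simp
  have "(\<Sum>j\<in>{1..N}. complex_of_real (laplacian N a i j) * u j)
      = complex_of_real Lii * u i + (\<Sum>j\<in>{1..N}-{i}. complex_of_real (laplacian N a i j) * u j)"
    unfolding Lii_def using sum.remove[OF fin1 i(1)] by simp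
  also have "(\<Sum>j\<in>{1..N}-{i}. complex_of_real (laplacian N a i j) * u j)
      = - (\<Sum>j\<in>{1..N}-{i}. complex_of_real (a i j) * u j)"
    by (simp add: laplacian_def sum_negf[symmetric])
  finally have "\<nu> * u i = complex_of_real Lii * u i - (\<Sum>j\<in>{1..N}-{i}. complex_of_real (a i j) * u j)"
    using eq i(1) by simp
  then have key: "(\<nu> - complex_of_real Lii) * u i = - (\<Sum>j\<in>{1..N}-{i}. complex_of_real (a i j) * u j)"
    by (simp add: algebra_simps)
  define Sd where "Sd = (\<Sum>j\<in>{1..N}-{i}. a i j * d j)"
  have "cmod (\<nu> - complex_of_real Lii) * cmod (u i) = cmod (\<Sum>j\<in>{1..N}-{i}. complex_of_real (a i j) * u j)"
    using key by (metis norm_minus_cancel norm_mult)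
  also have "\<dots> \<le> (\<Sum>j\<in>{1..N}-{i}. cmod (complex_of_real (a i j) * u j))"
    by (rule norm_sum)
  also have "\<dots> \<le> (\<Sum>j\<in>{1..N}-{i}. a i j * (g i * d j))"
  proof (rule sum_mono)
    fix j assume j: "j \<in> {1..N}-{i}"
    then have j1: "j \<in> {1..N}" and j0': "j \<in> {0..N}" by auto
    have a0: "0 \<le> a i j" using adm_facts(1)[OF adm e i0 j0'] .
    have "cmod (complex_of_real (a i j) * u j) = a i j * cmod (u j)"
      using a0 by (simp add: norm_mult)
    also have "\<dots> \<le> a i j * (g i * d j)" using ub[OF j1] a0 by (simp add: mult_left_mono)
    finally show "cmod (complex_of_real (a i j) * u j) \<le> a i j * (g i * d j)" .
  qed
  also have "\<dots> = g i * Sd" unfolding Sd_def by (simp add: sum_distrib_left algebra_simps)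
  finally have "cmod (\<nu> - complex_of_real Lii) * (g i * d i) \<le> g i * Sd" using ui by simp
  then have "g i * (cmod (\<nu> - complex_of_real Lii) * d i) \<le> g i * Sd" by (simp add: algebra_simps)
  then have nb: "cmod (\<nu> - complex_of_real Lii) * d i \<le> Sd" using gi by simp
  have Sd0: "Sd = (\<Sum>k\<in>{0..N}-{i}. a i k * d k)"
  proof -
    have "{0..N}-{i} = insert 0 ({1..N}-{i})" using i by auto
    then show ?thesis unfolding Sd_def using d0 by simp
  qed
  have "cH N e1 e2 \<le> (\<Sum>k\<in>{0..N}-{i}. a i k * (d i - d k))"
    using margin[OF adm e i(1)] unfolding d_def r_def by simp
  also have "\<dots> = Lii * d i - Sd" unfolding Sd0 Lii
    by (simp add: sum_subtractf sum_distrib_left algebra_simps)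
  finally have m: "cH N e1 e2 \<le> (Lii - cmod (\<nu> - complex_of_real Lii)) * d i"
    using nb by (simp add: algebra_simps)
  have reb: "Lii - cmod (\<nu> - complex_of_real Lii) \<le> Re \<nu>"
  proof -
    have "- cmod (\<nu> - complex_of_real Lii) \<le> Re (\<nu> - complex_of_real Lii)"
      using abs_Re_le_cmod[of "\<nu> - complex_of_real Lii"] by linarith
    then show ?thesis by simp
  qed
  have cpos: "0 < cH N e1 e2" using cH_pos[OF e] .
  define X where "X = Lii - cmod (\<nu> - complex_of_real Lii)"
  have dd: "0 < d i" "d i \<le> 1" using dpos[OF i(1)] by auto
  have "0 < X * d i" using m cpos unfolding X_def by linarith
  then have "0 < X" using dd by (simp add: zero_less_mult_iff)
  then have "X * d i \<le> X" using dd by (simp add: mult_left_le)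
  then show ?thesis using m reb unfolding X_def by linarith
qed



lemma sum_blocks: fixes n k :: nat shows "(\<Sum>c<n*k. g c) = (\<Sum>m<n. \<Sum>y<k. g (m*k+y))"
proof -
  have "(\<Sum>c<n*k. g c) = (\<Sum>m<n. sum g {m * k..<m * k + k})" using sum.nat_group[of g k n] by simp
  also have "\<dots> = (\<Sum>m<n. \<Sum>y<k. g (m*k+y))"
  proof (rule sum.cong[OF refl])
    fix m
    have "sum g {m * k..<m * k + k} = sum g {0 + m*k..<k + m*k}" by (simp add: add.commute)
    also have "\<dots> = (\<Sum>y\<in>{0..<k}. g (y + m*k))" by (rule sum.shift_bounds_nat_ivl)
    also have "\<dots> = (\<Sum>y<k. g (m*k+y))" by (simp add: atLeast0LessThan add.commute)
    finally show "sum g {m * k..<m * k + k} = (\<Sum>y<k. g (m*k+y))" .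
  qed
  finally show ?thesis .
qed

definition sig :: "real mat \<Rightarrow> real" where
  "sig S = (\<Sum>x<dim_row S. \<Sum>y<dim_col S. \<bar>S $$ (x,y)\<bar>)"

lemma sig_nonneg: "0 \<le> sig S"
  unfolding sig_def by (intro sum_nonneg, simp)

lemma eig_bound:
  assumes S: "S \<in> carrier_mat q q" and ev: "eigenvalue (map_mat complex_of_real S) s"
  shows "cmod s \<le> sig S"
proof -
  let ?Sc = "map_mat complex_of_real S"
  from ev obtain w where w: "eigenvector ?Sc w s" unfolding eigenvalue_def by blast
  then have wc: "w \<in> carrier_vec q" and wnz: "w \<noteq> 0\<^sub>v q" and we: "?Sc *\<^sub>v w = s \<cdot>\<^sub>v w"
    unfolding eigenvector_def using S by auto
  have "\<exists>x<q. w $ x \<noteq> 0"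
  proof (rule ccontr)
    assume "\<not> (\<exists>x<q. w $ x \<noteq> 0)"
    then have "w = 0\<^sub>v q" using wc by (intro eq_vecI, auto)
    then show False using wnz by simp
  qed
  then obtain x0 where x0: "x0 < q" "w $ x0 \<noteq> 0" by blast
  let ?f = "\<lambda>x. cmod (w $ x)"
  have fin: "finite (?f ` {..<q})" by simp
  have ne: "?f ` {..<q} \<noteq> {}" using x0 by blast
  have "Max (?f ` {..<q}) \<in> ?f ` {..<q}" by (rule Max_in[OF fin ne])
  then obtain x where x': "x \<in> {..<q}" "Max (?f ` {..<q}) = ?f x" by (rule imageE)
  then have x: "x < q" "?f x = Max (?f ` {..<q})" by simp_all
  have xm: "?f y \<le> ?f x" if "y < q" for y using Max_ge[OF fin] that x(2) by simp
  have fx: "0 < ?f x" using xm[OF x0(1)] x0(2) by (smt (verit) zero_less_norm_iff)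
  have "s * w $ x = (?Sc *\<^sub>v w) $ x" using we x wc by simp
  also have "\<dots> = (\<Sum>y<q. complex_of_real (S $$ (x,y)) * w $ y)"
    using S wc x by (simp add: mult_mat_vec_def scalar_prod_def atLeast0LessThan)
  finally have e1: "s * w $ x = (\<Sum>y<q. complex_of_real (S $$ (x,y)) * w $ y)" .
  have "cmod s * ?f x = cmod (\<Sum>y<q. complex_of_real (S $$ (x,y)) * w $ y)" using e1 by (metis norm_mult)
  also have "\<dots> \<le> (\<Sum>y<q. cmod (complex_of_real (S $$ (x,y)) * w $ y))" by (rule norm_sum)
  also have "\<dots> \<le> (\<Sum>y<q. \<bar>S $$ (x,y)\<bar> * ?f x)"
  proof (rule sum_mono)
    fix y assume "y \<in> {..<q}"
    then have "?f y \<le> ?f x" using xm by simp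
    then show "cmod (complex_of_real (S $$ (x,y)) * w $ y) \<le> \<bar>S $$ (x,y)\<bar> * ?f x"
      by (simp add: norm_mult mult_left_mono)
  qed
  also have "\<dots> = (\<Sum>y<q. \<bar>S $$ (x,y)\<bar>) * ?f x" by (simp add: sum_distrib_right)
  also have "(\<Sum>y<q. \<bar>S $$ (x,y)\<bar>) \<le> sig S"
  proof -
    have le0: "(\<lambda>x'. \<Sum>y<q. \<bar>S $$ (x',y)\<bar>) x \<le> (\<Sum>x'<q. \<Sum>y<q. \<bar>S $$ (x',y)\<bar>)"
      by (rule member_le_sum, insert x, auto intro: sum_nonneg)
    then have le: "(\<Sum>y<q. \<bar>S $$ (x,y)\<bar>) \<le> (\<Sum>x'<q. \<Sum>y<q. \<bar>S $$ (x',y)\<bar>)" by simp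
    have "sig S = (\<Sum>x'<q. \<Sum>y<q. \<bar>S $$ (x',y)\<bar>)" unfolding sig_def using S by simp
    then show ?thesis using le by simp
  qed
  then have "(\<Sum>y<q. \<bar>S $$ (x,y)\<bar>) * ?f x \<le> sig S * ?f x" using fx by simp
  finally have "cmod s * ?f x \<le> sig S * ?f x" by simp
  then show ?thesis using fx by simp
qed



lemma mult_entry:
  assumes "A \<in> carrier_mat n m" "B \<in> carrier_mat m p" "i < n" "j < p"
  shows "(A * B) $$ (i,j) = (\<Sum>z<m. A $$ (i,z) * B $$ (z,j))"
  using assms by (simp add: scalar_prod_def atLeast0LessThan)

lemma mult_vec_entry:
  assumes "A \<in> carrier_mat n m" "v \<in> carrier_vec m" "i < n"
  shows "(A *\<^sub>v v) $ i = (\<Sum>z<m. A $$ (i,z) * v $ z)"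
  using assms by (simp add: scalar_prod_def atLeast0LessThan)

lemma obs_entry:
  assumes S: "S \<in> carrier_mat q q" and i: "i < N" "j < N" and x: "x < q" "y < q"
  shows "observer_mat N S a mu $$ (i*q+x, j*q+y) =
     (if i = j then S $$ (x,y) else 0) - mu * laplacian N a (i+1) (j+1) * (if x = y then 1 else 0)"
proof -
  have q: "0 < q" using x by simp
  have r1: "(i*q+x) div q = i" "(i*q+x) mod q = x" using x q by auto
  have r2: "(j*q+y) div q = j" "(j*q+y) mod q = y" using x q by auto
  have lt1: "i*q+x < N*q"
  proof -
    have "i*q+x < i*q+q" using x by simp
    also have "\<dots> = Suc i * q" by simp
    also have "\<dots> \<le> N*q" using i by (intro mult_right_mono, simp_all)
    finally show ?thesis .
  qed
  have lt2: "j*q+y < N*q"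
  proof -
    have "j*q+y < j*q+q" using x by simp
    also have "\<dots> = Suc j * q" by simp
    also have "\<dots> \<le> N*q" using i by (intro mult_right_mono, simp_all)
    finally show ?thesis .
  qed
  show ?thesis unfolding observer_mat_def Let_def using S lt1 lt2 r1 r2 by simp
qed



lemma lt_block: fixes i x N q :: nat assumes "i < N" "x < q" shows "i*q+x < N*q"
proof -
  have "i*q+x < i*q+q" using assms by simp
  also have "\<dots> = Suc i * q" by simp
  also have "\<dots> \<le> N*q" using assms by (intro mult_right_mono, simp_all)
  finally show ?thesis .
qed

lemma observer_eig_eq:
  assumes S: "S \<in> carrier_mat q q"
    and Occ: "map_mat complex_of_real (observer_mat N S a mu) \<in> carrier_mat (N*q) (N*q)"
    and vc: "v \<in> carrier_vec (N*q)"
    and ve: "map_mat complex_of_real (observer_mat N S a mu) *\<^sub>v v = lam \<cdot>\<^sub>v v"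
    and i: "i < N" and x: "x < q"
  shows "(\<Sum>y<q. complex_of_real (S$$(x,y)) * v$(i*q+y)) =
     lam * v$(i*q+x) + complex_of_real mu * (\<Sum>j<N. complex_of_real (laplacian N a (i+1) (j+1)) * v$(j*q+x))"
proof -
  let ?Oc = "map_mat complex_of_real (observer_mat N S a mu)"
  let ?L = "\<lambda>j. complex_of_real (laplacian N a (i+1) (j+1))"
  have lt: "i*q+x < N*q" using lt_block[OF i x] .
  have "lam * v$(i*q+x) = (?Oc *\<^sub>v v) $ (i*q+x)" using ve vc lt by simp
  also have "\<dots> = (\<Sum>c<N*q. ?Oc $$ (i*q+x, c) * v$c)" by (rule mult_vec_entry[OF Occ vc lt])
  also have "\<dots> = (\<Sum>j<N. \<Sum>y<q. ?Oc $$ (i*q+x, j*q+y) * v$(j*q+y))" by (rule sum_blocks)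
  also have "\<dots> = (\<Sum>j<N. (if i = j then (\<Sum>y<q. complex_of_real (S$$(x,y)) * v$(i*q+y)) else 0)
                     - complex_of_real mu * (?L j * v$(j*q+x)))"
  proof (rule sum.cong[OF refl])
    fix j assume j: "j \<in> {..<N}"
    have ent: "?Oc $$ (i*q+x, j*q+y) = (if i = j then complex_of_real (S$$(x,y)) else 0)
         - complex_of_real mu * ?L j * (if x = y then 1 else 0)" if y: "y < q" for y
    proof -
      have "?Oc $$ (i*q+x, j*q+y) = complex_of_real (observer_mat N S a mu $$ (i*q+x, j*q+y))"
        using lt lt_block[of j N y q] j y Occ by simp
      also have "\<dots> = complex_of_real ((if i = j then S $$ (x,y) else 0) - mu * laplacian N a (i+1) (j+1) * (if x = y then 1 else 0))"
        using obs_entry[OF S i _ x y, of j] j by simp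
      finally show ?thesis by simp
    qed
    have "(\<Sum>y<q. ?Oc $$ (i*q+x, j*q+y) * v$(j*q+y)) =
       (\<Sum>y<q. (if i = j then complex_of_real (S$$(x,y)) * v$(j*q+y) else 0)
         - (if y = x then complex_of_real mu * ?L j * v$(j*q+y) else 0))"
    proof (rule sum.cong[OF refl])
      fix y assume "y \<in> {..<q}"
      then have y: "y < q" by simp
      show "?Oc $$ (i*q+x, j*q+y) * v$(j*q+y) = (if i = j then complex_of_real (S$$(x,y)) * v$(j*q+y) else 0)
         - (if y = x then complex_of_real mu * ?L j * v$(j*q+y) else 0)"
        unfolding ent[OF y] by (cases "i = j"; cases "y = x"; simp add: algebra_simps)
    qed
    also have "\<dots> = (\<Sum>y<q. (if i = j then complex_of_real (S$$(x,y)) * v$(j*q+y) else 0))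
         - (\<Sum>y<q. (if y = x then complex_of_real mu * ?L j * v$(j*q+y) else 0))"
      by (rule sum_subtractf)
    also have "(\<Sum>y<q. (if y = x then complex_of_real mu * ?L j * v$(j*q+y) else 0)) = complex_of_real mu * (?L j * v$(j*q+x))"
      using x by (simp add: sum.delta)
    also have "(\<Sum>y<q. (if i = j then complex_of_real (S$$(x,y)) * v$(j*q+y) else 0)) =
       (if i = j then (\<Sum>y<q. complex_of_real (S$$(x,y)) * v$(i*q+y)) else 0)"
      by simp
    finally show "(\<Sum>y<q. ?Oc $$ (i*q+x, j*q+y) * v$(j*q+y)) = (if i = j then (\<Sum>y<q. complex_of_real (S$$(x,y)) * v$(i*q+y)) else 0)
                     - complex_of_real mu * (?L j * v$(j*q+x))" .
  qed
  also have "\<dots> = (\<Sum>j<N. (if i = j then (\<Sum>y<q. complex_of_real (S$$(x,y)) * v$(i*q+y)) else 0))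
                 - (\<Sum>j<N. complex_of_real mu * (?L j * v$(j*q+x)))"
    by (rule sum_subtractf)
  also have "(\<Sum>j<N. (if i = j then (\<Sum>y<q. complex_of_real (S$$(x,y)) * v$(i*q+y)) else 0))
     = (\<Sum>y<q. complex_of_real (S$$(x,y)) * v$(i*q+y))"
    using i by (simp add: sum.delta)
  also have "(\<Sum>j<N. complex_of_real mu * (?L j * v$(j*q+x))) = complex_of_real mu * (\<Sum>j<N. ?L j * v$(j*q+x))"
    by (simp add: sum_distrib_left)
  finally show ?thesis by (simp add: algebra_simps)
qed


lemma observer_hurwitz:
  assumes S: "S \<in> carrier_mat q q" and adm: "admissible_graph N e1 e2 a" and e: "0 < e1" "e1 \<le> e2"
    and mu: "0 < mu" and big: "sig S < mu * cH N e1 e2"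
  shows "hurwitz (observer_mat N S a mu)"
proof -
  let ?O = "observer_mat N S a mu"
  have Oc: "?O \<in> carrier_mat (N*q) (N*q)" unfolding observer_mat_def Let_def using S by simp
  let ?Oc = "map_mat complex_of_real ?O"
  have Occ: "?Oc \<in> carrier_mat (N*q) (N*q)" using Oc by simp
  let ?Sc = "map_mat complex_of_real S"
  have Scc: "?Sc \<in> carrier_mat q q" using S by simp
  have "Re lam < 0" if ev: "eigenvalue ?Oc lam" for lam
  proof -
    obtain v where v: "eigenvector ?Oc v lam" using ev unfolding eigenvalue_def by blast
    have vc: "v \<in> carrier_vec (N*q)" and vnz: "v \<noteq> 0\<^sub>v (N*q)" and ve: "?Oc *\<^sub>v v = lam \<cdot>\<^sub>v v"
      using v Occ unfolding eigenvector_def by auto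
    define W0 where "W0 = mat q N (\<lambda>(x,i). v $ (i*q+x))"
    have W0c: "W0 \<in> carrier_mat q N" unfolding W0_def by simp
    define Lt where "Lt = mat N N (\<lambda>(j,i). complex_of_real (laplacian N a (i+1) (j+1)))"
    have Ltc: "Lt \<in> carrier_mat N N" unfolding Lt_def by simp
    have WLc: "W0 * Lt \<in> carrier_mat q N" using W0c Ltc by simp
    have mateq: "?Sc * W0 = lam \<cdot>\<^sub>m W0 + complex_of_real mu \<cdot>\<^sub>m (W0 * Lt)"
    proof (rule eq_matI)
      fix x i assume x': "x < dim_row (lam \<cdot>\<^sub>m W0 + complex_of_real mu \<cdot>\<^sub>m (W0 * Lt))"
        and i': "i < dim_col (lam \<cdot>\<^sub>m W0 + complex_of_real mu \<cdot>\<^sub>m (W0 * Lt))"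
      have x: "x < q" using x' W0c by simp
      have i: "i < N" using i' W0c Ltc by simp
      have "(?Sc * W0) $$ (x,i) = (\<Sum>y<q. ?Sc $$ (x,y) * W0 $$ (y,i))" by (rule mult_entry[OF Scc W0c x i])
      also have "\<dots> = (\<Sum>y<q. complex_of_real (S$$(x,y)) * v$(i*q+y))"
        by (rule sum.cong[OF refl], insert S x i, simp add: W0_def)
      also have "\<dots> = lam * v$(i*q+x) + complex_of_real mu * (\<Sum>j<N. complex_of_real (laplacian N a (i+1) (j+1)) * v$(j*q+x))"
        by (rule observer_eig_eq[OF S Occ vc ve i x])
      also have "(\<Sum>j<N. complex_of_real (laplacian N a (i+1) (j+1)) * v$(j*q+x)) = (\<Sum>j<N. W0 $$ (x,j) * Lt $$ (j,i))"
        by (rule sum.cong[OF refl], insert x i, simp add: W0_def Lt_def)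
      also have "\<dots> = (W0 * Lt) $$ (x,i)" by (rule mult_entry[OF W0c Ltc x i, symmetric])
      finally have f: "(?Sc * W0) $$ (x,i) = lam * v$(i*q+x) + complex_of_real mu * (W0 * Lt) $$ (x,i)" .
      have r: "(lam \<cdot>\<^sub>m W0 + complex_of_real mu \<cdot>\<^sub>m (W0 * Lt)) $$ (x,i) = lam * W0 $$ (x,i) + complex_of_real mu * (W0 * Lt) $$ (x,i)"
        using x i carrier_matD[OF W0c] carrier_matD[OF WLc] by simp
      have w: "W0 $$ (x,i) = v$(i*q+x)" unfolding W0_def using x i by simp
      show "(?Sc * W0) $$ (x,i) = (lam \<cdot>\<^sub>m W0 + complex_of_real mu \<cdot>\<^sub>m (W0 * Lt)) $$ (x,i)"
        unfolding f r w ..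
    next
      show "dim_row (?Sc * W0) = dim_row (lam \<cdot>\<^sub>m W0 + complex_of_real mu \<cdot>\<^sub>m (W0 * Lt))" using Scc W0c by simp
    next
      show "dim_col (?Sc * W0) = dim_col (lam \<cdot>\<^sub>m W0 + complex_of_real mu \<cdot>\<^sub>m (W0 * Lt))" using W0c Ltc by simp
    qed
    obtain es where es: "char_poly ?Sc = (\<Prod>a\<leftarrow>es. [:- a, 1:])" using char_poly_factorized[OF Scc] by blast
    obtain T P Q where sd: "schur_decomposition ?Sc es = (T,P,Q)" by (metis prod_cases3)
    from schur_decomposition[OF Scc es sd] have sim: "similar_mat_wit ?Sc T P Q"
      and ut: "upper_triangular T" and dg: "diag_mat T = es" by auto
    have dr: "dim_row ?Sc = q" using S by simp
    have simw: "{?Sc,T,P,Q} \<subseteq> carrier_mat q q \<and> P * Q = 1\<^sub>m q \<and> Q * P = 1\<^sub>m q \<and> ?Sc = P * T * Q"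
      using sim unfolding similar_mat_wit_def Let_def dr .
    then have Tc: "T \<in> carrier_mat q q" and Pc: "P \<in> carrier_mat q q" and Qc: "Q \<in> carrier_mat q q"
      and PQ: "P * Q = 1\<^sub>m q" and QP: "Q * P = 1\<^sub>m q" and SPTQ: "?Sc = P * T * Q"
      by blast+
    define W where "W = Q * W0"
    have Wc: "W \<in> carrier_mat q N" unfolding W_def using Qc W0c by simp
    have QS: "Q * ?Sc = T * Q"
    proof -
      have "Q * ?Sc = Q * (P * (T * Q))" unfolding SPTQ using Pc Tc Qc by simp
      also have "\<dots> = (Q * P) * (T * Q)" using Pc Tc Qc by (simp add: assoc_mult_mat[of Q q q P q "T * Q" q])
      also have "\<dots> = T * Q" unfolding QP using Tc Qc by simp
      finally show ?thesis .
    qed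
    have TW: "T * W = lam \<cdot>\<^sub>m W + complex_of_real mu \<cdot>\<^sub>m (W * Lt)"
    proof -
      have "T * W = (T * Q) * W0" unfolding W_def using Tc Qc W0c by simp
      also have "\<dots> = (Q * ?Sc) * W0" unfolding QS ..
      also have "\<dots> = Q * (?Sc * W0)" using Qc Scc W0c by simp
      also have "\<dots> = Q * (lam \<cdot>\<^sub>m W0) + Q * (complex_of_real mu \<cdot>\<^sub>m (W0 * Lt))"
        unfolding mateq using Qc W0c WLc by (simp add: mult_add_distrib_mat[of Q q q _ N])
      also have "Q * (lam \<cdot>\<^sub>m W0) = lam \<cdot>\<^sub>m W" unfolding W_def by (rule mult_smult_distrib[OF Qc W0c])
      also have "Q * (complex_of_real mu \<cdot>\<^sub>m (W0 * Lt)) = complex_of_real mu \<cdot>\<^sub>m (Q * (W0 * Lt))"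
        by (rule mult_smult_distrib[OF Qc WLc])
      also have "Q * (W0 * Lt) = W * Lt" unfolding W_def using Qc W0c Ltc by simp
      finally show ?thesis .
    qed
    have Wnz: "\<exists>x<q. \<exists>i<N. W $$ (x,i) \<noteq> 0"
    proof (rule ccontr)
      assume "\<not> (\<exists>x<q. \<exists>i<N. W $$ (x,i) \<noteq> 0)"
      then have W0': "W = 0\<^sub>m q N" using Wc by (intro eq_matI, auto)
      have "P * W = (P * Q) * W0" unfolding W_def using Pc Qc W0c by simp
      also have "\<dots> = W0" unfolding PQ using W0c by simp
      finally have "W0 = 0\<^sub>m q N" unfolding W0' using Pc by simp
      then have "v = 0\<^sub>v (N*q)"
      proof (intro eq_vecI)
        fix c assume "c < dim_vec (0\<^sub>v (N*q) :: complex vec)"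
        then have c: "c < N*q" by simp
        then have q: "0 < q" by (cases q, auto)
        have cd: "c div q < N" using c q by (simp add: less_mult_imp_div_less)
        have cm: "c mod q < q" using q by simp
        have "v $ c = W0 $$ (c mod q, c div q)" unfolding W0_def using cd cm by (simp add: add.commute mult.commute)
        also have "\<dots> = 0" using \<open>W0 = 0\<^sub>m q N\<close> cd cm by simp
        finally show "v $ c = 0\<^sub>v (N*q) $ c" using c by simp
      next
        show "dim_vec v = dim_vec (0\<^sub>v (N*q) :: complex vec)" using vc by simp
      qed
      then show False using vnz by simp
    qed
    define K where "K = {x. x < q \<and> (\<exists>i<N. W $$ (x,i) \<noteq> 0)}"
    have finK: "finite K" unfolding K_def by simp
    have neK: "K \<noteq> {}" using Wnz unfolding K_def by blast
    define k where "k = Max K"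
    have kK: "k \<in> K" unfolding k_def using Max_in[OF finK neK] .
    have kq: "k < q" and knz: "\<exists>i<N. W $$ (k,i) \<noteq> 0" using kK unfolding K_def by auto
    have above: "W $$ (x,i) = 0" if "x < q" "k < x" "i < N" for x i
    proof (rule ccontr)
      assume "W $$ (x,i) \<noteq> 0"
      then have "x \<in> K" unfolding K_def using that by blast
      then have "x \<le> k" unfolding k_def using Max_ge[OF finK] by blast
      then show False using that by simp
    qed
    have rowk: "T $$ (k,k) * W $$ (k,i) = lam * W $$ (k,i) + complex_of_real mu * (\<Sum>j<N. W $$ (k,j) * Lt $$ (j,i))"
      if i: "i < N" for i
    proof -
      have "(T * W) $$ (k,i) = (\<Sum>z<q. T $$ (k,z) * W $$ (z,i))" by (rule mult_entry[OF Tc Wc kq i])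
      also have "\<dots> = T $$ (k,k) * W $$ (k,i) + (\<Sum>z\<in>{..<q}-{k}. T $$ (k,z) * W $$ (z,i))"
        using sum.remove[of "{..<q}" k] kq by simp
      also have "(\<Sum>z\<in>{..<q}-{k}. T $$ (k,z) * W $$ (z,i)) = 0"
      proof (rule sum.neutral, rule ballI)
        fix z assume z: "z \<in> {..<q}-{k}"
        show "T $$ (k,z) * W $$ (z,i) = 0"
        proof (cases "z < k")
          case True
          then have "T $$ (k,z) = 0" using ut kq Tc unfolding upper_triangular_def by simp
          then show ?thesis by simp
        next
          case False
          then have "k < z" using z by simp
          then have "W $$ (z,i) = 0" using above z i by simp
          then show ?thesis by simp
        qed
      qed
      finally have l: "(T * W) $$ (k,i) = T $$ (k,k) * W $$ (k,i)" by simp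
      have "(lam \<cdot>\<^sub>m W + complex_of_real mu \<cdot>\<^sub>m (W * Lt)) $$ (k,i) = lam * W $$ (k,i) + complex_of_real mu * (W * Lt) $$ (k,i)"
        using Wc Ltc kq i by simp
      also have "(W * Lt) $$ (k,i) = (\<Sum>j<N. W $$ (k,j) * Lt $$ (j,i))" by (rule mult_entry[OF Wc Ltc kq i])
      finally show ?thesis using l TW by simp
    qed
    define \<nu> where "\<nu> = (T $$ (k,k) - lam) / complex_of_real mu"
    define u where "u j = W $$ (k, j - 1)" for j
    have ueq: "\<forall>i'\<in>{1..N}. (\<Sum>j\<in>{1..N}. complex_of_real (laplacian N a i' j) * u j) = \<nu> * u i'"
    proof
      fix i' assume i': "i' \<in> {1..N}"
      then obtain i where ii: "i' = Suc i" and i: "i < N" by (cases i', auto)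
      have "(\<Sum>j\<in>{1..N}. complex_of_real (laplacian N a i' j) * u j) = (\<Sum>j<N. complex_of_real (laplacian N a i' (Suc j)) * u (Suc j))"
        using sum.atLeast1_atMost_eq[of "\<lambda>j. complex_of_real (laplacian N a i' j) * u j" N] by simp
      also have "\<dots> = (\<Sum>j<N. W $$ (k,j) * Lt $$ (j,i))"
      proof (rule sum.cong[OF refl])
        fix j assume "j \<in> {..<N}"
        then have j: "j < N" by simp
        have "Lt $$ (j,i) = complex_of_real (laplacian N a (Suc i) (Suc j))" unfolding Lt_def using i j by simp
        then show "complex_of_real (laplacian N a i' (Suc j)) * u (Suc j) = W $$ (k,j) * Lt $$ (j,i)"
          unfolding u_def ii by simp
      qed
      also have "\<dots> = (T $$ (k,k) - lam) * W $$ (k,i) / complex_of_real mu"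
        using rowk[OF i] mu by (simp add: field_simps)
      also have "\<dots> = \<nu> * u i'" unfolding \<nu>_def u_def ii by simp
      finally show "(\<Sum>j\<in>{1..N}. complex_of_real (laplacian N a i' j) * u j) = \<nu> * u i'" .
    qed
    have unz: "\<exists>i\<in>{1..N}. u i \<noteq> 0"
    proof -
      obtain i where i: "i < N" "W $$ (k,i) \<noteq> 0" using knz by blast
      then have "Suc i \<in> {1..N}" "u (Suc i) \<noteq> 0" unfolding u_def by auto
      then show ?thesis by blast
    qed
    have gc: "cH N e1 e2 \<le> Re \<nu>" by (rule gersh[OF adm e ueq unz])
    have Ren: "Re \<nu> = (Re (T $$ (k,k)) - Re lam) / mu" unfolding \<nu>_def using mu by (simp add: Re_divide_of_real)
    have "T $$ (k,k) \<in> set es" unfolding dg[symmetric] diag_mat_def using kq Tc by simp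
    then have "poly (char_poly ?Sc) (T $$ (k,k)) = 0" unfolding es by (rule linear_poly_root)
    then have "eigenvalue ?Sc (T $$ (k,k))" using eigenvalue_root_char_poly[OF Scc] by simp
    then have "cmod (T $$ (k,k)) \<le> sig S" by (rule eig_bound[OF S])
    then have tb: "Re (T $$ (k,k)) \<le> sig S" using complex_Re_le_cmod[of "T $$ (k,k)"] by linarith
    have "mu * cH N e1 e2 \<le> mu * Re \<nu>" using gc mu by simp
    also have "mu * Re \<nu> = Re (T $$ (k,k)) - Re lam" unfolding Ren using mu by simp
    finally show "Re lam < 0" using tb big by linarith
  qed
  then show ?thesis unfolding hurwitz_def using Oc by simp
qed



lemma cons_R0:
  assumes cs: "consistent_sys D11 V X U Ec E F A B C D"
    and X: "X \<in> carrier_mat n L" and U: "U \<in> carrier_mat m L" and D11: "D11 \<in> carrier_mat L L"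
    and V: "V \<in> carrier_mat q L" and E: "E \<in> carrier_mat n q" and Ec: "Ec \<in> carrier_mat p L"
    and F: "F \<in> carrier_mat p q"
  shows "A \<in> carrier_mat n n" "B \<in> carrier_mat n m" "C \<in> carrier_mat p n" "D \<in> carrier_mat p m"
    "X * D11 - E * V = A * X + B * U" "Ec - F * V = C * X + D * U"
proof -
  note cs' = cs[unfolded consistent_sys_def]
  show A: "A \<in> carrier_mat n n" using cs' X by simp
  show B: "B \<in> carrier_mat n m" using cs' X U by simp
  show C: "C \<in> carrier_mat p n" using cs' X Ec by simp
  show D: "D \<in> carrier_mat p m" using cs' U Ec by simp
  have e1: "X * D11 = A * X + B * U + E * V" using cs' by simp
  have e2: "Ec = C * X + D * U + F * V" using cs' by simp
  show "X * D11 - E * V = A * X + B * U"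
  proof (rule eq_matI)
    fix i j assume i: "i < dim_row (A * X + B * U)" and j: "j < dim_col (A * X + B * U)"
    have i': "i < n" and j': "j < L" using i j carrier_matD[OF B] carrier_matD[OF U] by simp_all
    have "(X * D11) $$ (i,j) = (A * X + B * U + E * V) $$ (i,j)" using e1 by simp
    then have "(X * D11) $$ (i,j) = (A * X) $$ (i,j) + (B * U) $$ (i,j) + (E * V) $$ (i,j)"
      using i' j' carrier_matD[OF A] carrier_matD[OF X] carrier_matD[OF B] carrier_matD[OF U] carrier_matD[OF E] carrier_matD[OF V] by simp
    then show "(X * D11 - E * V) $$ (i,j) = (A * X + B * U) $$ (i,j)"
      using i' j' carrier_matD[OF A] carrier_matD[OF X] carrier_matD[OF B] carrier_matD[OF U] carrier_matD[OF E] carrier_matD[OF V] carrier_matD[OF D11] by simp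
  qed (insert A X B U D11 E V, auto)
  show "Ec - F * V = C * X + D * U"
  proof (rule eq_matI)
    fix i j assume i: "i < dim_row (C * X + D * U)" and j: "j < dim_col (C * X + D * U)"
    have i': "i < p" and j': "j < L" using i j carrier_matD[OF D] carrier_matD[OF U] by simp_all
    have "Ec $$ (i,j) = (C * X + D * U + F * V) $$ (i,j)" using e2 by simp
    then have "Ec $$ (i,j) = (C * X) $$ (i,j) + (D * U) $$ (i,j) + (F * V) $$ (i,j)"
      using i' j' carrier_matD[OF C] carrier_matD[OF X] carrier_matD[OF D] carrier_matD[OF U] carrier_matD[OF F] carrier_matD[OF V] by simp
    then show "(Ec - F * V) $$ (i,j) = (C * X + D * U) $$ (i,j)"
      using i' j' carrier_matD[OF C] carrier_matD[OF X] carrier_matD[OF D] carrier_matD[OF U] carrier_matD[OF F] carrier_matD[OF V] carrier_matD[OF Ec] by simp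
  qed (insert C X D U Ec F V, auto)
qed

lemma acl_eq:
  fixes A B X U Xp R :: "real mat"
  assumes A: "A \<in> carrier_mat n n" and B: "B \<in> carrier_mat n m" and X: "X \<in> carrier_mat n L"
    and U: "U \<in> carrier_mat m L" and Xp: "Xp \<in> carrier_mat L n" and XXp: "X * Xp = 1\<^sub>m n"
    and R: "R = A * X + B * U"
  shows "A + B * (U * Xp) = R * Xp"
proof -
  have AXc: "A * X \<in> carrier_mat n L" using A X by simp
  have BUc: "B * U \<in> carrier_mat n L" using B U by simp
  have "R * Xp = (A * X) * Xp + (B * U) * Xp" unfolding R by (rule add_mult_distrib_mat[OF AXc BUc Xp])
  also have "(A * X) * Xp = A * (X * Xp)" using A X Xp by simp
  also have "\<dots> = A" unfolding XXp by (rule right_mult_one_mat[OF A])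
  also have "(B * U) * Xp = B * (U * Xp)" using B U Xp by simp
  finally show ?thesis by simp
qed

lemma sum_list_const: "(\<forall>x\<in>set xs. f x = c) \<Longrightarrow> sum_list (map f xs) = length xs * (c::nat)"
  by (induct xs, auto)

lemma dbm_carrier: assumes "\<forall>x\<in>set xs. f x \<in> carrier_mat (r x) (c x)"
  shows "diag_block_mat (map f xs) \<in> carrier_mat (sum_list (map r xs)) (sum_list (map c xs))"
  using assms
proof (induct xs)
  case Nil then show ?case by simp
next
  case (Cons x xs)
  then have "diag_block_mat (map f xs) \<in> carrier_mat (sum_list (map r xs)) (sum_list (map c xs))" by simp
  moreover have "f x \<in> carrier_mat (r x) (c x)" using Cons by simp
  ultimately show ?case by (simp add: Let_def)
qed

lemma closed_loop_eig:
  assumes S: "S \<in> carrier_mat q q"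
    and cs: "\<forall>i\<in>{1..N}. Acl i \<in> carrier_mat (n i) (n i) \<and> BK2 i \<in> carrier_mat (n i) q"
  shows "square_mat (closed_loop_mat N S a mu Acl BK2)"
    "eigenvalue (map_mat complex_of_real (closed_loop_mat N S a mu Acl BK2)) e \<longleftrightarrow>
      (\<exists>i\<in>{1..N}. eigenvalue (map_mat complex_of_real (Acl i)) e) \<or>
      eigenvalue (map_mat complex_of_real (observer_mat N S a mu)) e"
proof -
  let ?TL = "diag_block_mat (map Acl [1..<N+1])"
  let ?TR = "diag_block_mat (map BK2 [1..<N+1])"
  let ?BR = "observer_mat N S a mu"
  define nn where "nn = sum_list (map n [1..<N+1])"
  have setl: "set [1..<N+1] = {1..N}" by auto
  have TLc: "?TL \<in> carrier_mat nn nn"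
    unfolding nn_def by (rule dbm_carrier, insert cs setl, auto)
  have TRc: "?TR \<in> carrier_mat nn (N*q)"
  proof -
    have "?TR \<in> carrier_mat (sum_list (map n [1..<N+1])) (sum_list (map (\<lambda>_. q) [1..<N+1]))"
      by (rule dbm_carrier, insert cs setl, auto)
    moreover have "sum_list (map (\<lambda>_. q) [1..<N+1]) = length [1..<N+1] * q"
      by (rule sum_list_const, simp)
    ultimately have "?TR \<in> carrier_mat nn (length [1..<N+1] * q)" unfolding nn_def by metis
    moreover have "length [1..<N+1] = N" using length_upt[of 1 "N+1"] by (simp del: upt_Suc)
    ultimately show ?thesis by metis
  qed
  have BRc: "?BR \<in> carrier_mat (N*q) (N*q)" unfolding observer_mat_def Let_def using S by simp
  have CL: "closed_loop_mat N S a mu Acl BK2 = four_block_mat ?TL ?TR (0\<^sub>m (N*q) nn) ?BR"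
    unfolding closed_loop_mat_def Let_def using BRc TLc by simp
  show "square_mat (closed_loop_mat N S a mu Acl BK2)" unfolding CL using TLc TRc BRc by simp
  have "map_mat complex_of_real (closed_loop_mat N S a mu Acl BK2) =
     four_block_mat (map_mat complex_of_real ?TL) (map_mat complex_of_real ?TR) (map_mat complex_of_real (0\<^sub>m (N*q) nn)) (map_mat complex_of_real ?BR)"
    unfolding CL by (rule map_four_block_mat[OF TLc TRc _ BRc], simp)
  also have "map_mat complex_of_real (0\<^sub>m (N*q) nn) = 0\<^sub>m (N*q) nn" by (rule eq_matI, simp_all)
  finally have CLc: "map_mat complex_of_real (closed_loop_mat N S a mu Acl BK2) =
     four_block_mat (map_mat complex_of_real ?TL) (map_mat complex_of_real ?TR) (0\<^sub>m (N*q) nn) (map_mat complex_of_real ?BR)" .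
  have TLcc: "map_mat complex_of_real ?TL \<in> carrier_mat nn nn" using TLc by simp
  have TRcc: "map_mat complex_of_real ?TR \<in> carrier_mat nn (N*q)" using TRc by simp
  have BRcc: "map_mat complex_of_real ?BR \<in> carrier_mat (N*q) (N*q)" using BRc by simp
  have TLeq: "map_mat complex_of_real ?TL = diag_block_mat (map (map_mat complex_of_real) (map Acl [1..<N+1]))"
    by (rule map_diag_block, simp)
  have sq: "\<forall>A\<in>set (map (map_mat complex_of_real) (map Acl [1..<N+1])). square_mat A"
    using cs setl by auto
  show "eigenvalue (map_mat complex_of_real (closed_loop_mat N S a mu Acl BK2)) e \<longleftrightarrow>
      (\<exists>i\<in>{1..N}. eigenvalue (map_mat complex_of_real (Acl i)) e) \<or>
      eigenvalue (map_mat complex_of_real (observer_mat N S a mu)) e"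
    unfolding CLc eig_four_block[OF TLcc TRcc BRcc] unfolding TLeq eig_diag_block[OF sq]
    using setl by auto
qed



lemma assoc_mult_mat':
  "dim_col A = dim_row B \<Longrightarrow> dim_col B = dim_row C \<Longrightarrow> (A * B) * C = A * (B * C)"
proof -
  assume h1: "dim_col A = dim_row B" and h2: "dim_col B = dim_row C"
  have a: "A \<in> carrier_mat (dim_row A) (dim_col A)" by (intro carrier_matI refl)
  have b: "B \<in> carrier_mat (dim_col A) (dim_col B)" using h1 by (intro carrier_matI, simp_all)
  have c: "C \<in> carrier_mat (dim_col B) (dim_col C)" using h2 by (intro carrier_matI, simp_all)
  show ?thesis by (rule assoc_mult_mat[OF a b c])
qed

lemma ginv_exists:
  fixes G :: "real mat"
  assumes G: "G \<in> carrier_mat nr nc"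
  shows "\<exists>Gp \<in> carrier_mat nc nr. G * Gp * G = G"
proof -
  define C where "C = gauss_jordan_single G"
  note gj = gauss_jordan_single[OF G C_def[symmetric]]
  have Cc: "C \<in> carrier_mat nr nc" using gj(2) .
  obtain P Q where PQ: "C = P * G" "P \<in> carrier_mat nr nr" "Q \<in> carrier_mat nr nr" "P * Q = 1\<^sub>m nr" "Q * P = 1\<^sub>m nr"
    using gj(4) by blast
  obtain f where pf: "pivot_fun C f nc" using gj(3) Cc unfolding row_echelon_form_def by auto
  have dr: "dim_row C = nr" using Cc by simp
  note pd = pivot_funD[OF dr pf]
  define Cp where "Cp = mat nc nr (\<lambda>(j,i). if f i < nc \<and> j = f i then 1 else (0::real))"
  have Cpc: "Cp \<in> carrier_mat nc nr" unfolding Cp_def by simp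
  define Dg where "Dg = mat nr nr (\<lambda>(i',i). if f i < nc \<and> i' = i then 1 else (0::real))"
  have CCp: "C * Cp = Dg"
  proof (rule eq_matI)
    fix i' i assume i': "i' < dim_row Dg" and i: "i < dim_col Dg"
    have i'': "i' < nr" "i < nr" using i' i unfolding Dg_def by auto
    have "(C * Cp) $$ (i',i) = (\<Sum>j<nc. C $$ (i',j) * Cp $$ (j,i))" by (rule mult_entry[OF Cc Cpc i''])
    also have "\<dots> = (\<Sum>j<nc. if j = f i then (if f i < nc then C $$ (i', f i) else 0) else 0)"
      by (rule sum.cong[OF refl], insert i'', auto simp: Cp_def)
    also have "\<dots> = (if f i < nc then C $$ (i', f i) else 0)" by (simp add: sum.delta)
    also have "\<dots> = Dg $$ (i',i)"
    proof (cases "f i < nc")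
      case True
      then show ?thesis unfolding Dg_def using i'' pd(4)[OF i''(2) True] pd(5)[OF i''(2) True i''(1)] by auto
    next
      case False then show ?thesis unfolding Dg_def using i'' by simp
    qed
    finally show "(C * Cp) $$ (i',i) = Dg $$ (i',i)" .
  qed (insert Cc Cpc, auto simp: Dg_def)
  have DgC: "Dg * C = C"
  proof (rule eq_matI)
    fix i' k assume i': "i' < dim_row C" and k: "k < dim_col C"
    have i'': "i' < nr" "k < nc" using i' k Cc by auto
    have Dgc: "Dg \<in> carrier_mat nr nr" unfolding Dg_def by simp
    have "(Dg * C) $$ (i',k) = (\<Sum>i<nr. Dg $$ (i',i) * C $$ (i,k))" by (rule mult_entry[OF Dgc Cc i''])
    also have "\<dots> = (\<Sum>i<nr. if i = i' then (if f i' < nc then C $$ (i',k) else 0) else 0)"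
      by (rule sum.cong[OF refl], insert i'', auto simp: Dg_def)
    also have "\<dots> = (if f i' < nc then C $$ (i',k) else 0)" using i'' by (simp add: sum.delta')
    also have "\<dots> = C $$ (i',k)"
    proof (cases "f i' < nc")
      case False
      then have "f i' = nc" using pd(1)[OF i''(1)] by simp
      then have "C $$ (i',k) = 0" using pd(2)[OF i''(1)] i''(2) by simp
      then show ?thesis by simp
    qed simp
    finally show "(Dg * C) $$ (i',k) = C $$ (i',k)" .
  qed (insert Cc, auto simp: Dg_def)
  have GQC: "G = Q * C"
  proof -
    have "Q * C = Q * (P * G)" unfolding PQ(1) ..
    also have "\<dots> = (Q * P) * G" by (rule assoc_mult_mat[symmetric, OF PQ(3) PQ(2) G])
    also have "\<dots> = G" unfolding PQ(5) using G by simp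
    finally show ?thesis by simp
  qed
  define Gp where "Gp = Cp * P"
  have Gpc: "Gp \<in> carrier_mat nc nr" unfolding Gp_def using Cpc PQ by simp
  have "G * Gp * G = Q * C * (Cp * P) * (Q * C)" unfolding Gp_def GQC[symmetric] unfolding GQC ..
  also have "\<dots> = Q * (C * Cp) * (P * Q) * C"
    using carrier_matD[OF Cc] carrier_matD[OF Cpc] carrier_matD[OF PQ(2)] carrier_matD[OF PQ(3)] by (simp add: assoc_mult_mat')
  also have "\<dots> = Q * Dg * 1\<^sub>m nr * C" unfolding CCp PQ(4) ..
  also have "\<dots> = Q * (Dg * C)" using carrier_matD[OF Cc] carrier_matD[OF PQ(3)] unfolding Dg_def by (simp add: assoc_mult_mat')
  also have "\<dots> = Q * C" unfolding DgC ..
  finally have "G * Gp * G = G" using GQC by simp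
  then show ?thesis using Gpc by blast
qed



lemma h_add_minus: fixes A B :: "real mat"
  assumes "A \<in> carrier_mat r c" "B \<in> carrier_mat r c" shows "A + (B - A) = B"
  by (rule eq_matI, insert carrier_matD[OF assms(1)] carrier_matD[OF assms(2)], simp_all)

lemma h_solve: fixes P Q E :: "real mat"
  assumes "P \<in> carrier_mat r c" "Q \<in> carrier_mat r c" "E \<in> carrier_mat r c" "P = Q - E"
  shows "Q = P + E"
proof (rule eq_matI)
  fix i j assume "i < dim_row (P + E)" "j < dim_col (P + E)"
  then have ij: "i < r" "j < c" using assms(3) by auto
  have "P $$ (i,j) = (Q - E) $$ (i,j)" using assms(4) by simp
  then show "Q $$ (i,j) = (P + E) $$ (i,j)"
    using ij carrier_matD[OF assms(1)] carrier_matD[OF assms(2)] carrier_matD[OF assms(3)] by simp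
qed (insert carrier_matD[OF assms(1)] carrier_matD[OF assms(2)] carrier_matD[OF assms(3)], simp_all)

lemma h_zero: fixes P F :: "real mat"
  assumes "P \<in> carrier_mat r c" "F \<in> carrier_mat r c" "P = - F"
  shows "0\<^sub>m r c = P + F"
proof (rule eq_matI)
  fix i j assume "i < dim_row (P + F)" "j < dim_col (P + F)"
  then have ij: "i < r" "j < c" using assms(2) by auto
  have "P $$ (i,j) = (- F) $$ (i,j)" using assms(3) by simp
  then show "0\<^sub>m r c $$ (i,j) = (P + F) $$ (i,j)"
    using ij carrier_matD[OF assms(1)] carrier_matD[OF assms(2)] by simp
qed (insert carrier_matD[OF assms(1)] carrier_matD[OF assms(2)], simp_all)

lemma reg_from_data:
  fixes X U Ec E F D11 V S A B C D Xp M :: "real mat"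
  assumes X: "X \<in> carrier_mat n L" and U: "U \<in> carrier_mat m L" and Ec: "Ec \<in> carrier_mat p L"
    and E: "E \<in> carrier_mat n q" and F: "F \<in> carrier_mat p q" and D11: "D11 \<in> carrier_mat L L"
    and V: "V \<in> carrier_mat q L" and S: "S \<in> carrier_mat q q"
    and cs: "consistent_sys D11 V X U Ec E F A B C D"
    and dc: "data_condition S D11 V X Ec E F Xp M"
  shows "hurwitz (A + B * (U * Xp))"
    "\<exists>Pi Gamma. Pi \<in> carrier_mat n q \<and> Gamma \<in> carrier_mat m q \<and>
        Gamma = (U * Xp) * Pi + (U - U * Xp * X) * M \<and>
        Pi * S = A * Pi + B * Gamma + E \<and> 0\<^sub>m p q = C * Pi + D * Gamma + F"
proof -
  note cr = cons_R0[OF cs X U D11 V E Ec F]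
  have A: "A \<in> carrier_mat n n" and B: "B \<in> carrier_mat n m" and C: "C \<in> carrier_mat p n"
    and D: "D \<in> carrier_mat p m" using cr by auto
  note dc' = dc[unfolded data_condition_def right_inverse_def]
  have Xp: "Xp \<in> carrier_mat L n" using dc' X by simp
  have XXp: "X * Xp = 1\<^sub>m n" using dc' X by simp
  have M: "M \<in> carrier_mat L q" using dc' X S by simp
  have eqM1: "(A * X + B * U) * M = X * M * S - E" using dc' cr(5) by simp
  have eqM2: "(C * X + D * U) * M = - F" using dc' cr(6) by simp
  have hw: "hurwitz ((X * D11 - E * V) * Xp)" using dc' by simp
  show "hurwitz (A + B * (U * Xp))"
    using acl_eq[OF A B X U Xp XXp cr(5)] hw by simp
  define Pi where "Pi = X * M"
  define Gamma where "Gamma = U * M"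
  have Pic: "Pi \<in> carrier_mat n q" unfolding Pi_def using X M by simp
  have Gc: "Gamma \<in> carrier_mat m q" unfolding Gamma_def using U M by simp
  have AXc: "A * X \<in> carrier_mat n L" using A X by simp
  have BUc: "B * U \<in> carrier_mat n L" using B U by simp
  have CXc: "C * X \<in> carrier_mat p L" using C X by simp
  have DUc: "D * U \<in> carrier_mat p L" using D U by simp
  have UXpXc: "U * Xp * X \<in> carrier_mat m L" using U Xp X by simp
  have g1: "(U - U * Xp * X) * M = U * M - (U * Xp * X) * M"
    by (rule minus_mult_distrib_mat[OF U UXpXc M])
  have g2: "(U * Xp) * Pi = (U * Xp * X) * M" unfolding Pi_def
    using carrier_matD[OF U] carrier_matD[OF Xp] carrier_matD[OF X] carrier_matD[OF M] by (simp add: assoc_mult_mat')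
  have Geq: "Gamma = (U * Xp) * Pi + (U - U * Xp * X) * M"
    unfolding g1 g2 Gamma_def
    by (rule h_add_minus[symmetric, OF mult_carrier_mat[OF UXpXc M] mult_carrier_mat[OF U M]])
  have ABM: "(A * X + B * U) * M = A * Pi + B * Gamma"
  proof -
    have "(A * X + B * U) * M = (A * X) * M + (B * U) * M" by (rule add_mult_distrib_mat[OF AXc BUc M])
    also have "(A * X) * M = A * Pi" unfolding Pi_def using A X M by simp
    also have "(B * U) * M = B * Gamma" unfolding Gamma_def using B U M by simp
    finally show ?thesis .
  qed
  have CDM: "(C * X + D * U) * M = C * Pi + D * Gamma"
  proof -
    have "(C * X + D * U) * M = (C * X) * M + (D * U) * M" by (rule add_mult_distrib_mat[OF CXc DUc M])
    also have "(C * X) * M = C * Pi" unfolding Pi_def using C X M by simp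
    also have "(D * U) * M = D * Gamma" unfolding Gamma_def using D U M by simp
    finally show ?thesis .
  qed
  have e1: "Pi * S = A * Pi + B * Gamma + E"
  proof -
    have "X * M * S = (A * X + B * U) * M + E"
      by (rule h_solve[OF mult_carrier_mat[OF add_carrier_mat[OF BUc] M] mult_carrier_mat[OF mult_carrier_mat[OF X M] S] E eqM1])
    then show ?thesis unfolding Pi_def ABM .
  qed
  have e2: "0\<^sub>m p q = C * Pi + D * Gamma + F"
  proof -
    have "0\<^sub>m p q = (C * X + D * U) * M + F"
      by (rule h_zero[OF mult_carrier_mat[OF add_carrier_mat[OF DUc] M] F eqM2])
    then show ?thesis unfolding CDM .
  qed
  show "\<exists>Pi Gamma. Pi \<in> carrier_mat n q \<and> Gamma \<in> carrier_mat m q \<and>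
        Gamma = (U * Xp) * Pi + (U - U * Xp * X) * M \<and>
        Pi * S = A * Pi + B * Gamma + E \<and> 0\<^sub>m p q = C * Pi + D * Gamma + F"
    using Pic Gc Geq e1 e2 by blast
qed



lemma hurwitz_cl:
  assumes S: "S \<in> carrier_mat q q" and adm: "admissible_graph N e1 e2 a" and e: "0 < e1" "e1 \<le> e2"
    and mu: "0 < mu" and big: "sig S < mu * cH N e1 e2"
    and cs: "\<forall>i\<in>{1..N}. Acl i \<in> carrier_mat (n i) (n i) \<and> BK2 i \<in> carrier_mat (n i) q"
    and hw: "\<forall>i\<in>{1..N}. hurwitz (Acl i)"
  shows "hurwitz (closed_loop_mat N S a mu Acl BK2)"
proof -
  note ce = closed_loop_eig[OF S cs, of a mu]
  have oh: "hurwitz (observer_mat N S a mu)" by (rule observer_hurwitz[OF S adm e mu big])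
  have "Re e < 0" if ev: "eigenvalue (map_mat complex_of_real (closed_loop_mat N S a mu Acl BK2)) e" for e
  proof -
    from ev ce(2) have "(\<exists>i\<in>{1..N}. eigenvalue (map_mat complex_of_real (Acl i)) e) \<or>
      eigenvalue (map_mat complex_of_real (observer_mat N S a mu)) e" by blast
    then show ?thesis
    proof
      assume "\<exists>i\<in>{1..N}. eigenvalue (map_mat complex_of_real (Acl i)) e"
      then obtain i where i: "i \<in> {1..N}" "eigenvalue (map_mat complex_of_real (Acl i)) e" by blast
      then show ?thesis using hw unfolding hurwitz_def by blast
    next
      assume "eigenvalue (map_mat complex_of_real (observer_mat N S a mu)) e"
      then show ?thesis using oh unfolding hurwitz_def by blast
    qed
  qed
  then show ?thesis unfolding hurwitz_def using ce(1) by blast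
qed

lemma suff:
  fixes S D11 V :: "real mat" and X U Ec E F Xp M :: "nat \<Rightarrow> real mat"
  assumes S: "S \<in> carrier_mat q q" and D11: "D11 \<in> carrier_mat L L" and V: "V \<in> carrier_mat q L"
    and dims: "\<forall>i\<in>{1..N}. X i \<in> carrier_mat (n i) L \<and> U i \<in> carrier_mat (m i) L \<and>
                  Ec i \<in> carrier_mat p L \<and> E i \<in> carrier_mat (n i) q \<and> F i \<in> carrier_mat p q"
    and adm: "admissible_graph N e1 e2 a" and e: "0 < e1" "e1 \<le> e2"
    and mu: "0 < mu" and big: "sig S < mu * cH N e1 e2"
    and dcs: "\<forall>i\<in>{1..N}. data_condition S D11 V (X i) (Ec i) (E i) (F i) (Xp i) (M i)"
  shows "gains_work N S a mu D11 V X U Ec E F (\<lambda>i. U i * Xp i) (\<lambda>i. (U i - U i * Xp i * X i) * M i)"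
  unfolding gains_work_def
proof (intro conjI allI impI)
  have dS: "dim_row S = q" using S by simp
  have Xpc: "Xp i \<in> carrier_mat L (n i)" and Mc: "M i \<in> carrier_mat L q" if i: "i \<in> {1..N}" for i
  proof -
    have X: "X i \<in> carrier_mat (n i) L" using dims i by simp
    have d: "dim_col (X i) = L" "dim_row (X i) = n i" using carrier_matD[OF X] by auto
    have "Xp i \<in> carrier_mat (dim_col (X i)) (dim_row (X i)) \<and> M i \<in> carrier_mat (dim_col (X i)) (dim_row S)"
      using dcs i unfolding data_condition_def right_inverse_def by auto
    then show "Xp i \<in> carrier_mat L (n i)" "M i \<in> carrier_mat L q" unfolding d dS by auto
  qed
  show "\<forall>i\<in>{1..N}. U i * Xp i \<in> carrier_mat (dim_row (U i)) (dim_row (X i)) \<and>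
         (U i - U i * Xp i * X i) * M i \<in> carrier_mat (dim_row (U i)) (dim_row S)"
  proof
    fix i assume i: "i \<in> {1..N}"
    have X: "X i \<in> carrier_mat (n i) L" and U: "U i \<in> carrier_mat (m i) L" using dims i by auto
    have c1: "U i * Xp i \<in> carrier_mat (m i) (n i)" using U Xpc[OF i] by simp
    have c2: "U i * Xp i * X i \<in> carrier_mat (m i) L" using c1 X by simp
    have c3: "(U i - U i * Xp i * X i) * M i \<in> carrier_mat (m i) q"
      using minus_carrier_mat[OF c2] Mc[OF i] by (metis mult_carrier_mat)
    show "U i * Xp i \<in> carrier_mat (dim_row (U i)) (dim_row (X i)) \<and>
         (U i - U i * Xp i * X i) * M i \<in> carrier_mat (dim_row (U i)) (dim_row S)"
      using c1 c3 U X dS by simp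
  qed
  fix A B C D
  assume cs: "\<forall>i\<in>{1..N}. consistent_sys D11 V (X i) (U i) (Ec i) (E i) (F i) (A i) (B i) (C i) (D i)"
  have rd: "hurwitz (A i + B i * (U i * Xp i))"
    "\<exists>Pi Gamma. Pi \<in> carrier_mat (n i) q \<and> Gamma \<in> carrier_mat (m i) q \<and>
        Gamma = (U i * Xp i) * Pi + (U i - U i * Xp i * X i) * M i \<and>
        Pi * S = A i * Pi + B i * Gamma + E i \<and> 0\<^sub>m p q = C i * Pi + D i * Gamma + F i"
    if i: "i \<in> {1..N}" for i
  proof -
    have X: "X i \<in> carrier_mat (n i) L" and U: "U i \<in> carrier_mat (m i) L" and Ec: "Ec i \<in> carrier_mat p L"
      and E: "E i \<in> carrier_mat (n i) q" and F: "F i \<in> carrier_mat p q" using dims i by auto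
    note r = reg_from_data[OF X U Ec E F D11 V S cs[rule_format, OF i] dcs[rule_format, OF i]]
    show "hurwitz (A i + B i * (U i * Xp i))" using r(1) .
    show "\<exists>Pi Gamma. Pi \<in> carrier_mat (n i) q \<and> Gamma \<in> carrier_mat (m i) q \<and>
        Gamma = (U i * Xp i) * Pi + (U i - U i * Xp i * X i) * M i \<and>
        Pi * S = A i * Pi + B i * Gamma + E i \<and> 0\<^sub>m p q = C i * Pi + D i * Gamma + F i" using r(2) .
  qed
  have ccs: "\<forall>i\<in>{1..N}. A i + B i * (U i * Xp i) \<in> carrier_mat (n i) (n i) \<and>
        B i * ((U i - U i * Xp i * X i) * M i) \<in> carrier_mat (n i) q"
  proof
    fix i assume i: "i \<in> {1..N}"
    have X: "X i \<in> carrier_mat (n i) L" and U: "U i \<in> carrier_mat (m i) L" and Ec: "Ec i \<in> carrier_mat p L"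
      and E: "E i \<in> carrier_mat (n i) q" and F: "F i \<in> carrier_mat p q" using dims i by auto
    note cr = cons_R0[OF cs[rule_format, OF i] X U D11 V E Ec F]
    have c1: "U i * Xp i \<in> carrier_mat (m i) (n i)" using U Xpc[OF i] by simp
    have c2: "U i * Xp i * X i \<in> carrier_mat (m i) L" using c1 X by simp
    have c3: "(U i - U i * Xp i * X i) * M i \<in> carrier_mat (m i) q"
      using minus_carrier_mat[OF c2] Mc[OF i] by (metis mult_carrier_mat)
    show "A i + B i * (U i * Xp i) \<in> carrier_mat (n i) (n i) \<and>
        B i * ((U i - U i * Xp i * X i) * M i) \<in> carrier_mat (n i) q"
      using cr(1) cr(2) c1 c3 by (metis add_carrier_mat mult_carrier_mat)
  qed
  show "hurwitz (closed_loop_mat N S a mu (\<lambda>i. A i + B i * (U i * Xp i)) (\<lambda>i. B i * ((U i - U i * Xp i * X i) * M i)))"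
    by (rule hurwitz_cl[OF S adm e mu big], insert ccs rd(1), auto)
  show "\<forall>i\<in>{1..N}. \<exists>Pi Gamma.
            Pi \<in> carrier_mat (dim_row (X i)) (dim_row S) \<and>
            Gamma \<in> carrier_mat (dim_row (U i)) (dim_row S) \<and>
            Gamma = U i * Xp i * Pi + (U i - U i * Xp i * X i) * M i \<and>
            Pi * S = A i * Pi + B i * Gamma + E i \<and>
            0\<^sub>m (dim_row (Ec i)) (dim_row S) = C i * Pi + D i * Gamma + F i"
  proof
    fix i assume i: "i \<in> {1..N}"
    have "dim_row (X i) = n i" "dim_row (U i) = m i" "dim_row (Ec i) = p" using dims i by auto
    then show "\<exists>Pi Gamma.
            Pi \<in> carrier_mat (dim_row (X i)) (dim_row S) \<and>
            Gamma \<in> carrier_mat (dim_row (U i)) (dim_row S) \<and>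
            Gamma = U i * Xp i * Pi + (U i - U i * Xp i * X i) * M i \<and>
            Pi * S = A i * Pi + B i * Gamma + E i \<and>
            0\<^sub>m (dim_row (Ec i)) (dim_row S) = C i * Pi + D i * Gamma + F i"
      using rd(2)[OF i] dS by simp
  qed
qed



lemma h_lin: fixes T1 T2 T3 R :: "real mat"
  assumes "T1 \<in> carrier_mat r c" "T2 \<in> carrier_mat r c" "T3 \<in> carrier_mat r c" "R \<in> carrier_mat r c"
    and "T3 - T2 = R - T1"
  shows "T1 - T2 + T3 = R"
proof (rule eq_matI)
  fix i j assume "i < dim_row R" "j < dim_col R"
  then have ij: "i < r" "j < c" using assms(4) by auto
  have "(T3 - T2) $$ (i,j) = (R - T1) $$ (i,j)" using assms(5) by simp
  then show "(T1 - T2 + T3) $$ (i,j) = R $$ (i,j)"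
    using ij carrier_matD[OF assms(1)] carrier_matD[OF assms(2)] carrier_matD[OF assms(3)] carrier_matD[OF assms(4)] by simp
qed (insert carrier_matD[OF assms(1)] carrier_matD[OF assms(2)] carrier_matD[OF assms(3)] carrier_matD[OF assms(4)], simp_all)

lemma h_sub: fixes P Q E :: "real mat"
  assumes "P \<in> carrier_mat r c" "Q \<in> carrier_mat r c" "E \<in> carrier_mat r c" "Q = P + E"
  shows "P = Q - E"
proof (rule eq_matI)
  fix i j assume "i < dim_row (Q - E)" "j < dim_col (Q - E)"
  then have ij: "i < r" "j < c" using assms(3) by auto
  have "Q $$ (i,j) = (P + E) $$ (i,j)" using assms(4) by simp
  then show "P $$ (i,j) = (Q - E) $$ (i,j)"
    using ij carrier_matD[OF assms(1)] carrier_matD[OF assms(2)] carrier_matD[OF assms(3)] by simp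
qed (insert carrier_matD[OF assms(1)] carrier_matD[OF assms(2)] carrier_matD[OF assms(3)], simp_all)

lemma h_zero2: fixes P F :: "real mat"
  assumes "P \<in> carrier_mat r c" "F \<in> carrier_mat r c" "0\<^sub>m r c = P + F"
  shows "P = - F"
proof (rule eq_matI)
  fix i j assume "i < dim_row (- F)" "j < dim_col (- F)"
  then have ij: "i < r" "j < c" using assms(2) by auto
  have "0\<^sub>m r c $$ (i,j) = (P + F) $$ (i,j)" using assms(3) by simp
  then show "P $$ (i,j) = (- F) $$ (i,j)"
    using ij carrier_matD[OF assms(1)] carrier_matD[OF assms(2)] by simp
qed (insert carrier_matD[OF assms(1)] carrier_matD[OF assms(2)], simp_all)

lemma h_xpp: fixes X Xp :: "real mat"
  assumes X: "X \<in> carrier_mat n L" and Xp: "Xp \<in> carrier_mat L n" and XXp: "X * Xp = 1\<^sub>m n"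
  shows "X * (1\<^sub>m L - Xp * X) = 0\<^sub>m n L"
proof -
  have XpX: "Xp * X \<in> carrier_mat L L" using Xp X by simp
  have "X * (1\<^sub>m L - Xp * X) = X * 1\<^sub>m L - X * (Xp * X)" by (rule mult_minus_distrib_mat[OF X one_carrier_mat XpX])
  also have "X * (Xp * X) = (X * Xp) * X" using X Xp by simp
  also have "\<dots> = X" unfolding XXp using X by simp
  also have "X * 1\<^sub>m L = X" using X by simp
  finally show ?thesis using X by simp
qed

lemma cons_mod:
  fixes X U Xp A0 B0 R Pm :: "real mat"
  assumes X: "X \<in> carrier_mat n L" and U: "U \<in> carrier_mat m L" and Xp: "Xp \<in> carrier_mat L n"
    and XXp: "X * Xp = 1\<^sub>m n" and A0: "A0 \<in> carrier_mat r n" and B0: "B0 \<in> carrier_mat r m"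
    and R: "R = A0 * X + B0 * U" and Pm: "Pm \<in> carrier_mat m m"
    and PG: "Pm * (U * (1\<^sub>m L - Xp * X)) = U * (1\<^sub>m L - Xp * X)"
  shows "(R * Xp - (B0 * Pm) * (U * Xp)) * X + (B0 * Pm) * U = R"
proof -
  define Pp where "Pp = 1\<^sub>m L - Xp * X"
  define G where "G = U * Pp"
  define B' where "B' = B0 * Pm"
  have Ppc: "Pp \<in> carrier_mat L L" unfolding Pp_def by (rule minus_carrier_mat[OF mult_carrier_mat[OF Xp X]])
  have Gc: "G \<in> carrier_mat m L" unfolding G_def using U Ppc by simp
  have B'c: "B' \<in> carrier_mat r m" unfolding B'_def using B0 Pm by simp
  have Rc: "R \<in> carrier_mat r L" unfolding R using A0 X B0 U by simp
  have UXpc: "U * Xp \<in> carrier_mat m n" using U Xp by simp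
  have UXpXc: "U * Xp * X \<in> carrier_mat m L" using UXpc X by simp
  have RXpc: "R * Xp \<in> carrier_mat r n" using Rc Xp by simp
  have B'Kc: "B' * (U * Xp) \<in> carrier_mat r n" using B'c UXpc by simp
  have s1: "(R * Xp - B' * (U * Xp)) * X = R * Xp * X - B' * (U * Xp) * X"
    by (rule minus_mult_distrib_mat[OF RXpc B'Kc X])
  have s2: "B' * (U * Xp) * X = B' * (U * Xp * X)"
    using carrier_matD[OF B'c] carrier_matD[OF U] carrier_matD[OF Xp] carrier_matD[OF X] by (simp add: assoc_mult_mat')
  have s3: "B' * U - B' * (U * Xp * X) = B' * G"
  proof -
    have "B' * U - B' * (U * Xp * X) = B' * (U - U * Xp * X)"
      by (rule mult_minus_distrib_mat[symmetric, OF B'c U UXpXc])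
    also have "U - U * Xp * X = G"
    proof -
      have "G = U * 1\<^sub>m L - U * (Xp * X)" unfolding G_def Pp_def
        by (rule mult_minus_distrib_mat[OF U one_carrier_mat], insert Xp X, simp)
      also have "U * 1\<^sub>m L = U" using U by simp
      also have "U * (Xp * X) = U * Xp * X" using U Xp X by simp
      finally show ?thesis by simp
    qed
    finally show ?thesis .
  qed
  have s4: "B' * G = B0 * G" unfolding B'_def using B0 Pm Gc PG unfolding G_def Pp_def by simp
  have s5: "B0 * G = R - R * Xp * X"
  proof -
    have "R * Pp = (A0 * X) * Pp + (B0 * U) * Pp" unfolding R
      by (rule add_mult_distrib_mat[OF mult_carrier_mat[OF A0 X] mult_carrier_mat[OF B0 U] Ppc])
    also have "(A0 * X) * Pp = A0 * (X * Pp)" using A0 X Ppc by simp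
    also have "X * Pp = 0\<^sub>m n L" unfolding Pp_def by (rule h_xpp[OF X Xp XXp])
    also have "A0 * 0\<^sub>m n L = 0\<^sub>m r L" using A0 by simp
    also have "(B0 * U) * Pp = B0 * G" unfolding G_def using B0 U Ppc by simp
    finally have a: "R * Pp = 0\<^sub>m r L + B0 * G" .
    have "R * Pp = R * 1\<^sub>m L - R * (Xp * X)" unfolding Pp_def
      by (rule mult_minus_distrib_mat[OF Rc one_carrier_mat], insert Xp X, simp)
    also have "R * 1\<^sub>m L = R" using Rc by simp
    also have "R * (Xp * X) = R * Xp * X" using Rc Xp X by simp
    finally have b: "R * Pp = R - R * Xp * X" .
    have "0\<^sub>m r L + B0 * G = B0 * G" using B0 Gc by simp
    then show ?thesis using a b by simp
  qed
  have "(R * Xp - B' * (U * Xp)) * X + B' * U = R * Xp * X - B' * (U * Xp * X) + B' * U"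
    unfolding s1 s2 ..
  also have "\<dots> = R"
    by (rule h_lin[of _ r L], insert RXpc X B'c UXpXc U Rc s3 s4 s5, simp_all)
  finally show ?thesis unfolding B'_def .
qed



lemma RM:
  fixes A' B' X U M Pi K2 Pm K1 :: "real mat"
  assumes A': "A' \<in> carrier_mat r n" and B': "B' \<in> carrier_mat r m" and X: "X \<in> carrier_mat n L"
    and U: "U \<in> carrier_mat m L" and M: "M \<in> carrier_mat L q" and Pi: "Pi \<in> carrier_mat n q"
    and K2: "K2 \<in> carrier_mat m q" and Pm: "Pm \<in> carrier_mat m m" and K1: "K1 \<in> carrier_mat m n"
    and XM: "X * M = Pi" and UM: "U * M = K1 * Pi + Pm * K2" and BP: "B' * Pm = B'"
  shows "(A' * X + B' * U) * M = A' * Pi + B' * (K1 * Pi + K2)"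
proof -
  have "(A' * X + B' * U) * M = (A' * X) * M + (B' * U) * M"
    by (rule add_mult_distrib_mat[OF mult_carrier_mat[OF A' X] mult_carrier_mat[OF B' U] M])
  also have "(A' * X) * M = A' * Pi" using A' X M XM by simp
  also have "(B' * U) * M = B' * (K1 * Pi + Pm * K2)" using B' U M UM by simp
  also have "\<dots> = B' * (K1 * Pi) + B' * (Pm * K2)"
    by (rule mult_add_distrib_mat[OF B' mult_carrier_mat[OF K1 Pi] mult_carrier_mat[OF Pm K2]])
  also have "B' * (Pm * K2) = B' * K2" using B' Pm K2 BP by (simp add: assoc_mult_mat[symmetric, OF B' Pm K2])
  also have "B' * (K1 * Pi) + B' * K2 = B' * (K1 * Pi + K2)"
    by (rule mult_add_distrib_mat[symmetric, OF B' mult_carrier_mat[OF K1 Pi] K2])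
  finally show ?thesis .
qed

lemma nec1:
  fixes X U Ec E F D11 V S A B C D Xp Gp K2 Pi Gamma :: "real mat"
  assumes X: "X \<in> carrier_mat n L" and U: "U \<in> carrier_mat m L" and Ec: "Ec \<in> carrier_mat p L"
    and E: "E \<in> carrier_mat n q" and F: "F \<in> carrier_mat p q" and D11: "D11 \<in> carrier_mat L L"
    and V: "V \<in> carrier_mat q L" and S: "S \<in> carrier_mat q q"
    and Xp: "Xp \<in> carrier_mat L n" and XXp: "X * Xp = 1\<^sub>m n"
    and cs: "consistent_sys D11 V X U Ec E F A B C D"
    and hw: "hurwitz (A + B * (U * Xp))"
    and Gp: "Gp \<in> carrier_mat L m"
    and BP: "B * ((U * (1\<^sub>m L - Xp * X)) * Gp) = B" and DP: "D * ((U * (1\<^sub>m L - Xp * X)) * Gp) = D"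
    and K2: "K2 \<in> carrier_mat m q"
    and Pi: "Pi \<in> carrier_mat n q" and Gm: "Gamma \<in> carrier_mat m q"
    and GE: "Gamma = (U * Xp) * Pi + K2"
    and e1: "Pi * S = A * Pi + B * Gamma + E" and e2: "0\<^sub>m p q = C * Pi + D * Gamma + F"
  shows "data_condition S D11 V X Ec E F Xp (Xp * Pi + (1\<^sub>m L - Xp * X) * (Gp * K2))"
proof -
  note cr = cons_R0[OF cs X U D11 V E Ec F]
  have A: "A \<in> carrier_mat n n" and B: "B \<in> carrier_mat n m" and C: "C \<in> carrier_mat p n"
    and D: "D \<in> carrier_mat p m" using cr by auto
  define Pp where "Pp = 1\<^sub>m L - Xp * X"
  define Pm where "Pm = (U * Pp) * Gp"
  define M where "M = Xp * Pi + Pp * (Gp * K2)"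
  have Ppc: "Pp \<in> carrier_mat L L" unfolding Pp_def by (rule minus_carrier_mat[OF mult_carrier_mat[OF Xp X]])
  have Pmc: "Pm \<in> carrier_mat m m" unfolding Pm_def using U Ppc Gp by simp
  have GK: "Gp * K2 \<in> carrier_mat L q" using Gp K2 by simp
  have Mc: "M \<in> carrier_mat L q" unfolding M_def using Xp Pi Ppc GK by simp
  have K1: "U * Xp \<in> carrier_mat m n" using U Xp by simp
  have XM: "X * M = Pi"
  proof -
    have "X * M = X * (Xp * Pi) + X * (Pp * (Gp * K2))" unfolding M_def
      by (rule mult_add_distrib_mat[OF X mult_carrier_mat[OF Xp Pi] mult_carrier_mat[OF Ppc GK]])
    also have "X * (Xp * Pi) = (X * Xp) * Pi" using X Xp Pi by simp
    also have "\<dots> = Pi" unfolding XXp using Pi by simp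
    also have "X * (Pp * (Gp * K2)) = (X * Pp) * (Gp * K2)" using X Ppc GK by simp
    also have "X * Pp = 0\<^sub>m n L" unfolding Pp_def by (rule h_xpp[OF X Xp XXp])
    also have "0\<^sub>m n L * (Gp * K2) = 0\<^sub>m n q" by (rule left_mult_zero_mat[OF GK])
    finally show ?thesis using Pi by simp
  qed
  have UM: "U * M = (U * Xp) * Pi + Pm * K2"
  proof -
    have "U * M = U * (Xp * Pi) + U * (Pp * (Gp * K2))" unfolding M_def
      by (rule mult_add_distrib_mat[OF U mult_carrier_mat[OF Xp Pi] mult_carrier_mat[OF Ppc GK]])
    also have "U * (Xp * Pi) = (U * Xp) * Pi" using U Xp Pi by simp
    also have "U * (Pp * (Gp * K2)) = Pm * K2" unfolding Pm_def
      using carrier_matD[OF U] carrier_matD[OF Ppc] carrier_matD[OF Gp] carrier_matD[OF K2] by (simp add: assoc_mult_mat')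
    finally show ?thesis .
  qed
  have BP': "B * Pm = B" using BP unfolding Pm_def Pp_def .
  have DP': "D * Pm = D" using DP unfolding Pm_def Pp_def .
  have RM1: "(A * X + B * U) * M = A * Pi + B * Gamma" unfolding GE
    by (rule RM[OF A B X U Mc Pi K2 Pmc K1 XM UM BP'])
  have RM2: "(C * X + D * U) * M = C * Pi + D * Gamma" unfolding GE
    by (rule RM[OF C D X U Mc Pi K2 Pmc K1 XM UM DP'])
  have APc: "A * Pi + B * Gamma \<in> carrier_mat n q" using A Pi B Gm by simp
  have CPc: "C * Pi + D * Gamma \<in> carrier_mat p q" using C Pi D Gm by simp
  have PSc: "Pi * S \<in> carrier_mat n q" using Pi S by simp
  have d1: "(X * D11 - E * V) * M = X * M * S - E"
    unfolding cr(5) RM1 XM by (rule h_sub[OF APc PSc E e1])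
  have d2: "(Ec - F * V) * M = - F"
    unfolding cr(6) RM2 by (rule h_zero2[OF CPc F e2])
  have h: "hurwitz ((X * D11 - E * V) * Xp)"
    using acl_eq[OF A B X U Xp XXp cr(5)] hw by simp
  have dX: "dim_col X = L" "dim_row X = n" using X by auto
  have dS: "dim_row S = q" using S by simp
  show ?thesis unfolding data_condition_def right_inverse_def Pp_def[symmetric] M_def[symmetric] dX dS
    by (intro conjI Xp XXp h Mc d1 d2)
qed



lemma nec:
  fixes S D11 V :: "real mat" and X U Ec E F Xp K2 :: "nat \<Rightarrow> real mat"
  assumes S: "S \<in> carrier_mat q q" and D11: "D11 \<in> carrier_mat L L" and V: "V \<in> carrier_mat q L"
    and dims: "\<forall>i\<in>{1..N}. X i \<in> carrier_mat (n i) L \<and> U i \<in> carrier_mat (m i) L \<and>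
                  Ec i \<in> carrier_mat p L \<and> E i \<in> carrier_mat (n i) q \<and> F i \<in> carrier_mat p q"
    and exact: "\<exists>A B C D. \<forall>i\<in>{1..N}.
                  consistent_sys D11 V (X i) (U i) (Ec i) (E i) (F i) (A i) (B i) (C i) (D i)"
    and ri: "\<forall>i\<in>{1..N}. right_inverse (X i) (Xp i)"
    and gw: "gains_work N S a mu D11 V X U Ec E F (\<lambda>i. U i * Xp i) K2"
  shows "\<forall>i\<in>{1..N}. \<exists>Xp M. data_condition S D11 V (X i) (Ec i) (E i) (F i) Xp M"
proof -
  obtain A0 B0 C0 D0 where cs0: "\<forall>i\<in>{1..N}.
      consistent_sys D11 V (X i) (U i) (Ec i) (E i) (F i) (A0 i) (B0 i) (C0 i) (D0 i)"
    using exact by blast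
  have dS: "dim_row S = q" using S by simp
  define Pp where "Pp i = 1\<^sub>m L - Xp i * X i" for i
  define G where "G i = U i * Pp i" for i
  define Gp where "Gp i = (SOME Gp. Gp \<in> carrier_mat L (m i) \<and> G i * Gp * G i = G i)" for i
  define Pm where "Pm i = G i * Gp i" for i
  define R0 where "R0 i = X i * D11 - E i * V" for i
  define R1 where "R1 i = Ec i - F i * V" for i
  define B' where "B' i = B0 i * Pm i" for i
  define D' where "D' i = D0 i * Pm i" for i
  define A' where "A' i = R0 i * Xp i - B' i * (U i * Xp i)" for i
  define C' where "C' i = R1 i * Xp i - D' i * (U i * Xp i)" for i
  have basic: "X i \<in> carrier_mat (n i) L \<and> U i \<in> carrier_mat (m i) L \<and>
      Ec i \<in> carrier_mat p L \<and> E i \<in> carrier_mat (n i) q \<and> F i \<in> carrier_mat p q \<and>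
      Xp i \<in> carrier_mat L (n i) \<and> X i * Xp i = 1\<^sub>m (n i) \<and>
      Pp i \<in> carrier_mat L L \<and> G i \<in> carrier_mat (m i) L \<and>
      Gp i \<in> carrier_mat L (m i) \<and> G i * Gp i * G i = G i \<and> Pm i \<in> carrier_mat (m i) (m i) \<and>
      Pm i * G i = G i \<and> Pm i * Pm i = Pm i"
    if i: "i \<in> {1..N}" for i
  proof -
    have X: "X i \<in> carrier_mat (n i) L" and U: "U i \<in> carrier_mat (m i) L" and Ec: "Ec i \<in> carrier_mat p L"
      and E: "E i \<in> carrier_mat (n i) q" and F: "F i \<in> carrier_mat p q" using dims i by auto
    have dX: "dim_col (X i) = L" "dim_row (X i) = n i" using X by auto
    have Xp: "Xp i \<in> carrier_mat L (n i)" and XXp: "X i * Xp i = 1\<^sub>m (n i)"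
  proof -
      have "right_inverse (X i) (Xp i)" using ri i by blast
      then show "Xp i \<in> carrier_mat L (n i)" "X i * Xp i = 1\<^sub>m (n i)" unfolding right_inverse_def dX by auto
    qed
    have Ppc: "Pp i \<in> carrier_mat L L" unfolding Pp_def by (rule minus_carrier_mat[OF mult_carrier_mat[OF Xp X]])
    have Gc: "G i \<in> carrier_mat (m i) L" unfolding G_def using U Ppc by simp
    have ex: "\<exists>Gp. Gp \<in> carrier_mat L (m i) \<and> G i * Gp * G i = G i" using ginv_exists[OF Gc] by blast
    have Gpp: "Gp i \<in> carrier_mat L (m i) \<and> G i * Gp i * G i = G i"
      unfolding Gp_def by (rule someI_ex[OF ex])
    have Pmc: "Pm i \<in> carrier_mat (m i) (m i)" unfolding Pm_def using Gc Gpp by simp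
    have PG: "Pm i * G i = G i" unfolding Pm_def using Gpp by simp
    have PP: "Pm i * Pm i = Pm i"
    proof -
      have Gpc: "Gp i \<in> carrier_mat L (m i)" using Gpp by simp
      have "Pm i * Pm i = (Pm i * G i) * Gp i" unfolding Pm_def
        by (rule assoc_mult_mat[symmetric, OF mult_carrier_mat[OF Gc Gpc] Gc Gpc])
      also have "\<dots> = Pm i" unfolding PG unfolding Pm_def ..
      finally show ?thesis .
    qed
    show ?thesis using X U Ec E F Xp XXp Ppc Gc Gpp Pmc PG PP by blast
  qed
  have cons': "consistent_sys D11 V (X i) (U i) (Ec i) (E i) (F i) (A' i) (B' i) (C' i) (D' i)"
    if i: "i \<in> {1..N}" for i
  proof -
    note b = basic[OF i]
    have X: "X i \<in> carrier_mat (n i) L" and U: "U i \<in> carrier_mat (m i) L" and Ec: "Ec i \<in> carrier_mat p L"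
      and E: "E i \<in> carrier_mat (n i) q" and F: "F i \<in> carrier_mat p q" and Xp: "Xp i \<in> carrier_mat L (n i)"
      and XXp: "X i * Xp i = 1\<^sub>m (n i)" and Pmc: "Pm i \<in> carrier_mat (m i) (m i)"
      and PG: "Pm i * G i = G i" using b by auto
    note cr = cons_R0[OF cs0[rule_format, OF i] X U D11 V E Ec F]
    have PG': "Pm i * (U i * (1\<^sub>m L - Xp i * X i)) = U i * (1\<^sub>m L - Xp i * X i)"
      using PG unfolding G_def Pp_def .
    have m1: "A' i * X i + B' i * U i = R0 i" unfolding A'_def B'_def
      by (rule cons_mod[OF X U Xp XXp cr(1) cr(2) _ Pmc PG'], simp add: R0_def cr(5))
    have m2: "C' i * X i + D' i * U i = R1 i" unfolding C'_def D'_def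
      by (rule cons_mod[OF X U Xp XXp cr(3) cr(4) _ Pmc PG'], simp add: R1_def cr(6))
    have R0c: "R0 i \<in> carrier_mat (n i) L" unfolding R0_def using X D11 by (intro minus_carrier_mat[OF mult_carrier_mat[OF E V]])
    have R1c: "R1 i \<in> carrier_mat p L" unfolding R1_def by (rule minus_carrier_mat[OF mult_carrier_mat[OF F V]])
    have XD: "X i * D11 \<in> carrier_mat (n i) L" using X D11 by simp
    have EV: "E i * V \<in> carrier_mat (n i) L" using E V by simp
    have FV: "F i * V \<in> carrier_mat p L" using F V by simp
    have q1: "X i * D11 = R0 i + E i * V" by (rule h_solve[OF R0c XD EV], simp add: R0_def)
    have q2: "Ec i = R1 i + F i * V" by (rule h_solve[OF R1c Ec FV], simp add: R1_def)
    have B'c: "B' i \<in> carrier_mat (n i) (m i)" unfolding B'_def using cr(2) Pmc by simp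
    have D'c: "D' i \<in> carrier_mat p (m i)" unfolding D'_def using cr(4) Pmc by simp
    have UXp: "U i * Xp i \<in> carrier_mat (m i) (n i)" using U Xp by simp
    have A'c: "A' i \<in> carrier_mat (n i) (n i)" unfolding A'_def
      by (rule minus_carrier_mat[OF mult_carrier_mat[OF B'c UXp]])
    have C'c: "C' i \<in> carrier_mat p (n i)" unfolding C'_def
      by (rule minus_carrier_mat[OF mult_carrier_mat[OF D'c UXp]])
    have dX: "dim_row (X i) = n i" using X by simp
    have dU: "dim_row (U i) = m i" using U by simp
    have dE: "dim_row (Ec i) = p" using Ec by simp
    show ?thesis unfolding consistent_sys_def dX dU dE
      using A'c B'c C'c D'c q1 q2 m1 m2 by simp
  qed
  have gw1: "\<forall>i\<in>{1..N}. K2 i \<in> carrier_mat (dim_row (U i)) (dim_row S)"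
    using gw unfolding gains_work_def by blast
  have gw2: "hurwitz (closed_loop_mat N S a mu (\<lambda>i. A' i + B' i * (U i * Xp i)) (\<lambda>i. B' i * K2 i)) \<and>
        (\<forall>i\<in>{1..N}. \<exists>Pi Gamma.
            Pi \<in> carrier_mat (dim_row (X i)) (dim_row S) \<and>
            Gamma \<in> carrier_mat (dim_row (U i)) (dim_row S) \<and>
            Gamma = U i * Xp i * Pi + K2 i \<and>
            Pi * S = A' i * Pi + B' i * Gamma + E i \<and>
            0\<^sub>m (dim_row (Ec i)) (dim_row S) = C' i * Pi + D' i * Gamma + F i)"
    using gw cons' unfolding gains_work_def by blast
  have ccs: "\<forall>i\<in>{1..N}. A' i + B' i * (U i * Xp i) \<in> carrier_mat (n i) (n i) \<and> B' i * K2 i \<in> carrier_mat (n i) q"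
  proof
    fix i assume i: "i \<in> {1..N}"
    note b = basic[OF i]
    have X: "X i \<in> carrier_mat (n i) L" and U: "U i \<in> carrier_mat (m i) L" and Ec: "Ec i \<in> carrier_mat p L"
      and E: "E i \<in> carrier_mat (n i) q" and F: "F i \<in> carrier_mat p q" and Xp: "Xp i \<in> carrier_mat L (n i)"
      using b by auto
    note cr = cons_R0[OF cons'[OF i] X U D11 V E Ec F]
    have K2c: "K2 i \<in> carrier_mat (m i) q"
    proof -
      have "K2 i \<in> carrier_mat (dim_row (U i)) (dim_row S)" using gw1 i by blast
      then show ?thesis using U dS by simp
    qed
    have UXp: "U i * Xp i \<in> carrier_mat (m i) (n i)" using U Xp by simp
    show "A' i + B' i * (U i * Xp i) \<in> carrier_mat (n i) (n i) \<and> B' i * K2 i \<in> carrier_mat (n i) q"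
      using cr(1) cr(2) UXp K2c by (metis add_carrier_mat mult_carrier_mat)
  qed
  note ce = closed_loop_eig[OF S ccs, of a mu]
  show ?thesis
  proof
    fix i assume i: "i \<in> {1..N}"
    note b = basic[OF i]
    have X: "X i \<in> carrier_mat (n i) L" and U: "U i \<in> carrier_mat (m i) L" and Ec: "Ec i \<in> carrier_mat p L"
      and E: "E i \<in> carrier_mat (n i) q" and F: "F i \<in> carrier_mat p q" and Xp: "Xp i \<in> carrier_mat L (n i)"
      and XXp: "X i * Xp i = 1\<^sub>m (n i)" and Gpc: "Gp i \<in> carrier_mat L (m i)"
      and Pmc: "Pm i \<in> carrier_mat (m i) (m i)" and PP: "Pm i * Pm i = Pm i"
      using b by auto
    note cr = cons_R0[OF cons'[OF i] X U D11 V E Ec F]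
    note cr0 = cons_R0[OF cs0[rule_format, OF i] X U D11 V E Ec F]
    have hwi: "hurwitz (A' i + B' i * (U i * Xp i))"
      unfolding hurwitz_def
    proof
      have "A' i + B' i * (U i * Xp i) \<in> carrier_mat (n i) (n i)" using ccs i by blast
      then show "square_mat (A' i + B' i * (U i * Xp i))" unfolding square_mat.simps by (metis carrier_matD)
      show "\<forall>lam. eigenvalue (map_mat complex_of_real (A' i + B' i * (U i * Xp i))) lam \<longrightarrow> Re lam < 0"
      proof (intro allI impI)
        fix lam assume "eigenvalue (map_mat complex_of_real (A' i + B' i * (U i * Xp i))) lam"
        then have "eigenvalue (map_mat complex_of_real (closed_loop_mat N S a mu (\<lambda>i. A' i + B' i * (U i * Xp i)) (\<lambda>i. B' i * K2 i))) lam"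
          using ce(2) i by blast
        then show "Re lam < 0" using gw2 unfolding hurwitz_def by blast
      qed
    qed
    have BP: "B' i * ((U i * (1\<^sub>m L - Xp i * X i)) * Gp i) = B' i"
    proof -
      have "B' i * ((U i * (1\<^sub>m L - Xp i * X i)) * Gp i) = B0 i * Pm i * Pm i"
        unfolding B'_def Pm_def G_def Pp_def ..
      also have "\<dots> = B0 i * (Pm i * Pm i)" by (rule assoc_mult_mat[OF cr0(2) Pmc Pmc])
      also have "\<dots> = B' i" unfolding PP B'_def ..
      finally show ?thesis .
    qed
    have DP: "D' i * ((U i * (1\<^sub>m L - Xp i * X i)) * Gp i) = D' i"
    proof -
      have "D' i * ((U i * (1\<^sub>m L - Xp i * X i)) * Gp i) = D0 i * Pm i * Pm i"
        unfolding D'_def Pm_def G_def Pp_def ..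
      also have "\<dots> = D0 i * (Pm i * Pm i)" by (rule assoc_mult_mat[OF cr0(4) Pmc Pmc])
      also have "\<dots> = D' i" unfolding PP D'_def ..
      finally show ?thesis .
    qed
    have K2c: "K2 i \<in> carrier_mat (m i) q"
    proof -
      have "K2 i \<in> carrier_mat (dim_row (U i)) (dim_row S)" using gw1 i by blast
      then show ?thesis using U dS by simp
    qed
    obtain Pi Gamma where PG: "Pi \<in> carrier_mat (dim_row (X i)) (dim_row S)"
        "Gamma \<in> carrier_mat (dim_row (U i)) (dim_row S)"
        "Gamma = U i * Xp i * Pi + K2 i"
        "Pi * S = A' i * Pi + B' i * Gamma + E i"
        "0\<^sub>m (dim_row (Ec i)) (dim_row S) = C' i * Pi + D' i * Gamma + F i"
      using gw2 i by blast
    have dX: "dim_row (X i) = n i" using X by simp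
    have dU: "dim_row (U i) = m i" using U by simp
    have dE: "dim_row (Ec i) = p" using Ec by simp
    note PG' = PG[unfolded dX dU dE dS]
    have "data_condition S D11 V (X i) (Ec i) (E i) (F i) (Xp i) (Xp i * Pi + (1\<^sub>m L - Xp i * X i) * (Gp i * K2 i))"
      by (rule nec1[OF X U Ec E F D11 V S Xp XXp cons'[OF i] hwi Gpc BP DP K2c PG'])
    then show "\<exists>Xp M. data_condition S D11 V (X i) (Ec i) (E i) (F i) Xp M" by blast
  qed
qed



theorem theorem5:
  fixes N p q L :: nat
    and n m :: "nat \<Rightarrow> nat"
    and S D11 V :: "real mat"
    and X U Ec E F :: "nat \<Rightarrow> real mat"
    and eps1 eps2 :: real
  assumes N: "N \<ge> 1"
    and S: "S \<in> carrier_mat q q"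
    and D11: "D11 \<in> carrier_mat L L"
    and V: "V \<in> carrier_mat q L"
    and dims: "\<forall>i\<in>{1..N}. X i \<in> carrier_mat (n i) L \<and> U i \<in> carrier_mat (m i) L \<and>
                  Ec i \<in> carrier_mat p L \<and> E i \<in> carrier_mat (n i) q \<and> F i \<in> carrier_mat p q"
    and S_spec: "\<forall>lam. eigenvalue (map_mat complex_of_real S) lam \<longrightarrow> Re lam \<ge> 0"
    and exact_data: "\<exists>A B C D. \<forall>i\<in>{1..N}.
                       consistent_sys D11 V (X i) (U i) (Ec i) (E i) (F i) (A i) (B i) (C i) (D i)"
    and eps: "0 < eps1" "eps1 \<le> eps2"
  shows "\<exists>mu0. \<forall>mu \<ge> mu0. \<forall>a. admissible_graph N eps1 eps2 a \<longrightarrow>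
           ((informative_cor N S a mu D11 V X U Ec E F \<longleftrightarrow>
               (\<forall>i\<in>{1..N}. \<exists>Xp M. data_condition S D11 V (X i) (Ec i) (E i) (F i) Xp M)) \<and>
            (\<forall>Xp M. (\<forall>i\<in>{1..N}. data_condition S D11 V (X i) (Ec i) (E i) (F i) (Xp i) (M i)) \<longrightarrow>
               gains_work N S a mu D11 V X U Ec E F (\<lambda>i. U i * Xp i)
                 (\<lambda>i. (U i - U i * Xp i * X i) * M i)))"
proof -
  have cpos: "0 < cH N eps1 eps2" by (rule cH_pos[OF eps])
  define mu0 where "mu0 = (sig S + 1) / cH N eps1 eps2"
  have mu0pos: "0 < mu0" unfolding mu0_def using cpos sig_nonneg[of S] by simp
  have "\<forall>mu \<ge> mu0. \<forall>a. admissible_graph N eps1 eps2 a \<longrightarrow>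
           ((informative_cor N S a mu D11 V X U Ec E F \<longleftrightarrow>
               (\<forall>i\<in>{1..N}. \<exists>Xp M. data_condition S D11 V (X i) (Ec i) (E i) (F i) Xp M)) \<and>
            (\<forall>Xp M. (\<forall>i\<in>{1..N}. data_condition S D11 V (X i) (Ec i) (E i) (F i) (Xp i) (M i)) \<longrightarrow>
               gains_work N S a mu D11 V X U Ec E F (\<lambda>i. U i * Xp i)
                 (\<lambda>i. (U i - U i * Xp i * X i) * M i)))"
  proof (intro allI impI)
    fix mu a assume mu: "mu0 \<le> mu" and adm: "admissible_graph N eps1 eps2 a"
    have mup: "0 < mu" using mu mu0pos by simp
    have "sig S + 1 = mu0 * cH N eps1 eps2" unfolding mu0_def using cpos by simp
    also have "\<dots> \<le> mu * cH N eps1 eps2" using mu cpos by (simp add: mult_right_mono)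
    finally have big: "sig S < mu * cH N eps1 eps2" by simp
    note sf = suff[OF S D11 V dims adm eps mup big]
    show "(informative_cor N S a mu D11 V X U Ec E F \<longleftrightarrow>
               (\<forall>i\<in>{1..N}. \<exists>Xp M. data_condition S D11 V (X i) (Ec i) (E i) (F i) Xp M)) \<and>
            (\<forall>Xp M. (\<forall>i\<in>{1..N}. data_condition S D11 V (X i) (Ec i) (E i) (F i) (Xp i) (M i)) \<longrightarrow>
               gains_work N S a mu D11 V X U Ec E F (\<lambda>i. U i * Xp i)
                 (\<lambda>i. (U i - U i * Xp i * X i) * M i))"
    proof (intro conjI iffI allI impI)
      assume "informative_cor N S a mu D11 V X U Ec E F"
      then obtain Xp K2 where ri: "\<forall>i\<in>{1..N}. right_inverse (X i) (Xp i)"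
        and gw: "gains_work N S a mu D11 V X U Ec E F (\<lambda>i. U i * Xp i) K2"
        unfolding informative_cor_def by blast
      show "\<forall>i\<in>{1..N}. \<exists>Xp M. data_condition S D11 V (X i) (Ec i) (E i) (F i) Xp M"
        by (rule nec[OF S D11 V dims exact_data ri gw])
    next
      assume "\<forall>i\<in>{1..N}. \<exists>Xp M. data_condition S D11 V (X i) (Ec i) (E i) (F i) Xp M"
      then obtain Xpf Mf where dcs: "\<forall>i\<in>{1..N}. data_condition S D11 V (X i) (Ec i) (E i) (F i) (Xpf i) (Mf i)"
        by metis
      have ri: "\<forall>i\<in>{1..N}. right_inverse (X i) (Xpf i)" using dcs unfolding data_condition_def by blast
      show "informative_cor N S a mu D11 V X U Ec E F"
        unfolding informative_cor_def using ri sf[OF dcs] by blast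
    next
      fix Xp M
      assume "\<forall>i\<in>{1..N}. data_condition S D11 V (X i) (Ec i) (E i) (F i) (Xp i) (M i)"
      then show "gains_work N S a mu D11 V X U Ec E F (\<lambda>i. U i * Xp i) (\<lambda>i. (U i - U i * Xp i * X i) * M i)"
        by (rule sf)
    qed
  qed
  then show ?thesis by blast
qed


end
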